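(* Let $A$ be a commutative DGA and $\lambda=(0\to Z\to\widetilde L\xrightarrow{\pi}L\to0)$ an MC-product data. Let $\alpha\in A^+\otimes L$ be a defining system and $X\in(A^+\otimes L)^0$. Then $\exp X\cdot\alpha$ is again a defining system and $m(\exp X\cdot\alpha)=m(\alpha)$.
   Context: All algebras are over $\mathbb{Q}$. A commutative DGA $(A,d)$ is a graded-commutative algebra $A=\bigoplus_{i\ge0}A^i$ with a degree $+1$ derivation $d$, $d^2=0$. Write $A^+=\bigoplus_{i>0}A^i$. A DGLA is a graded Lie algebra with a degree $+1$ differential which is a derivation. It is nilpotent if its lower central series terminates at $0$. For a DGLA $(L,d_L)$, $A\otimes L$ is the DGLA with total grading, bracket $[b_1\otimes w_1,b_2\otimes w_2]=(-1)^{|w_1||b_2|}b_1b_2\otimes[w_1,w_2]$ and differential $d(b\otimes w)=d_Ab\otimes w+(-1)^{|b|}b\otimes d_Lw$. For degree-one $\alpha$ put $F(\alpha)=d\alpha+\tfrac12[\alpha,\alpha]$; $\alpha$ is a Maurer–Cartan element if $F(\alpha)=0$. For a nilpotent DGLA $\Lambda$ and $X\in\Lambda^0$, the gauge action is $(\exp X)\cdot\alpha=\alpha-\sum_{i\ge0}\frac{(\operatorname{ad}X)^i}{(i+1)!}(dX+[\alpha,X])$. An MC-product data consists of: - a central extension $0\to Z\to\widetilde L\xrightarrow{\pi}L\to0$ of nilpotent DGLAs (differentials $\tilde d_L$, $d_L$) concentrated in nonpositive degrees, with $Z\subseteq\ker\tilde d_L$ and $\operatorname{Im}\tilde d_L\cap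 Z=0$; - an isomorphism $Z\cong\mathbb{Q}[q]$ ($q\le0$). A defining system is an MC element $\alpha\in A^+\otimes L$. For any degree-one lift $\tilde\alpha\in A^+\otimes\widetilde L$, $F(\tilde\alpha)\in A^+\otimes Z\cong A^+[q]$ is a cocycle of degree $2-q$ in $A$. Its class $m(\alpha)\in H^{2-q}(A)$ is independent of the lift and is the MC higher product. *)

theory Defs
  imports Complex_Main
begin

definition gsign :: "int \<Rightarrow> 'v::uminus \<Rightarrow> 'v" where
  "gsign k v = (if even k then v else - v)"

definition graded_vs :: "(rat \<Rightarrow> 'v::ab_group_add \<Rightarrow> 'v) \<Rightarrow> (int \<Rightarrow> 'v set) \<Rightarrow> bool" where
  "graded_vs s G \<longleftrightarrow> vector_space s \<and> (\<forall>i. module.subspace s (G i)) \<and>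
     (\<forall>x. \<exists>!f. finite {i. f i \<noteq> 0} \<and> (\<forall>i. f i \<in> G i) \<and> x = (\<Sum>i\<in>{i. f i \<noteq> 0}. f i))"

definition cdga :: "(rat \<Rightarrow> 'a::ring \<Rightarrow> 'a) \<Rightarrow> (int \<Rightarrow> 'a set) \<Rightarrow> ('a \<Rightarrow> 'a) \<Rightarrow> bool" where
  "cdga s G d \<longleftrightarrow> graded_vs s G \<and> (\<forall>i<0. G i = {0}) \<and>
     (\<forall>r x y. s r (x * y) = s r x * y \<and> s r (x * y) = x * s r y) \<and>
     (\<exists>e\<in>G 0. \<forall>x. e * x = x \<and> x * e = x) \<and>
     (\<forall>i j x y. x \<in> G i \<longrightarrow> y \<in> G j \<longrightarrow> x * y \<in> G (i + j)) \<and>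
     (\<forall>i j x y. x \<in> G i \<longrightarrow> y \<in> G j \<longrightarrow> x * y = gsign (i * j) (y * x)) \<and>
     Vector_Spaces.linear s s d \<and> (\<forall>i x. x \<in> G i \<longrightarrow> d x \<in> G (i + 1)) \<and>
     (\<forall>x. d (d x) = 0) \<and>
     (\<forall>i x y. x \<in> G i \<longrightarrow> d (x * y) = d x * y + gsign i (x * d y))"

definition dgla :: "(rat \<Rightarrow> 'l::ab_group_add \<Rightarrow> 'l) \<Rightarrow> (int \<Rightarrow> 'l set) \<Rightarrow>
    ('l \<Rightarrow> 'l \<Rightarrow> 'l) \<Rightarrow> ('l \<Rightarrow> 'l) \<Rightarrow> bool" where
  "dgla s G br d \<longleftrightarrow> graded_vs s G \<and>
     (\<forall>x. Vector_Spaces.linear s s (br x)) \<and> (\<forall>y. Vector_Spaces.linear s s (\<lambda>x. br x y)) \<and>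
     (\<forall>i j x y. x \<in> G i \<longrightarrow> y \<in> G j \<longrightarrow> br x y \<in> G (i + j)) \<and>
     (\<forall>i j x y. x \<in> G i \<longrightarrow> y \<in> G j \<longrightarrow> br x y = - gsign (i * j) (br y x)) \<and>
     (\<forall>i j x y z. x \<in> G i \<longrightarrow> y \<in> G j \<longrightarrow>
        br x (br y z) = br (br x y) z + gsign (i * j) (br y (br x z))) \<and>
     Vector_Spaces.linear s s d \<and> (\<forall>i x. x \<in> G i \<longrightarrow> d x \<in> G (i + 1)) \<and>
     (\<forall>x. d (d x) = 0) \<and>
     (\<forall>i x y. x \<in> G i \<longrightarrow> d (br x y) = br (d x) y + gsign i (br x (d y)))"

fun lcs :: "(rat \<Rightarrow> 'l::ab_group_add \<Rightarrow> 'l) \<Rightarrow> ('l \<Rightarrow> 'l \<Rightarrow> 'l) \<Rightarrow> nat \<Rightarrow> 'l set" where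
  "lcs s br 0 = UNIV"
| "lcs s br (Suc k) = module.span s {br x y | x y. y \<in> lcs s br k}"

definition nilpotent_la :: "(rat \<Rightarrow> 'l::ab_group_add \<Rightarrow> 'l) \<Rightarrow> ('l \<Rightarrow> 'l \<Rightarrow> 'l) \<Rightarrow> bool" where
  "nilpotent_la s br \<longleftrightarrow> (\<exists>k. lcs s br k = {0})"

definition nonpositive :: "(int \<Rightarrow> 'l::zero set) \<Rightarrow> bool" where
  "nonpositive G \<longleftrightarrow> (\<forall>i>0. G i = {0})"

definition dgla_hom :: "(rat \<Rightarrow> 'm::ab_group_add \<Rightarrow> 'm) \<Rightarrow> (int \<Rightarrow> 'm set) \<Rightarrow>
    ('m \<Rightarrow> 'm \<Rightarrow> 'm) \<Rightarrow> ('m \<Rightarrow> 'm) \<Rightarrow>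
    (rat \<Rightarrow> 'l::ab_group_add \<Rightarrow> 'l) \<Rightarrow> (int \<Rightarrow> 'l set) \<Rightarrow> ('l \<Rightarrow> 'l \<Rightarrow> 'l) \<Rightarrow> ('l \<Rightarrow> 'l) \<Rightarrow>
    ('m \<Rightarrow> 'l) \<Rightarrow> bool" where
  "dgla_hom s1 G1 br1 d1 s2 G2 br2 d2 f \<longleftrightarrow> Vector_Spaces.linear s1 s2 f \<and>
     (\<forall>i x. x \<in> G1 i \<longrightarrow> f x \<in> G2 i) \<and> (\<forall>x y. f (br1 x y) = br2 (f x) (f y)) \<and>
     (\<forall>x. f (d1 x) = d2 (f x))"

text \<open>Central extension 0 -> Z -> Lt -> L -> 0 with Z = ker pi, together with the
  isomorphism Z = Q[q] given by the generator z (image of 1) of degree q.\<close>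

definition mc_product_data ::
  "(rat \<Rightarrow> 'm::ab_group_add \<Rightarrow> 'm) \<Rightarrow> (int \<Rightarrow> 'm set) \<Rightarrow> ('m \<Rightarrow> 'm \<Rightarrow> 'm) \<Rightarrow> ('m \<Rightarrow> 'm) \<Rightarrow>
   (rat \<Rightarrow> 'l::ab_group_add \<Rightarrow> 'l) \<Rightarrow> (int \<Rightarrow> 'l set) \<Rightarrow> ('l \<Rightarrow> 'l \<Rightarrow> 'l) \<Rightarrow> ('l \<Rightarrow> 'l) \<Rightarrow>
   ('m \<Rightarrow> 'l) \<Rightarrow> int \<Rightarrow> 'm \<Rightarrow> bool" where
  "mc_product_data st Gt brt dt s G br d \<pi> q z \<longleftrightarrow>
     dgla st Gt brt dt \<and> dgla s G br d \<and> nilpotent_la st brt \<and> nilpotent_la s br \<and>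
     nonpositive Gt \<and> nonpositive G \<and>
     dgla_hom st Gt brt dt s G br d \<pi> \<and> surj \<pi> \<and>
     (\<forall>x y. \<pi> x = 0 \<longrightarrow> brt x y = 0) \<and>
     (\<forall>x. \<pi> x = 0 \<longrightarrow> dt x = 0) \<and>
     (\<forall>x. \<pi> (dt x) = 0 \<longrightarrow> dt x = 0) \<and>
     q \<le> 0 \<and> z \<in> Gt q \<and> z \<noteq> 0 \<and> {x. \<pi> x = 0} = range (\<lambda>r. st r z)"

text \<open>An element of A (x) V is represented by a finite formal sum (list) of pure tensors
  a (x) w of homogeneous elements, each entry recording (deg a, a, deg w, w).
  Two formal sums represent the same element of the tensor product iff they agree under
  every pair of linear functionals phi : A -> Q, psi : V -> Q (over a field the tensor
  product embeds into such bilinear evaluations).\<close>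

type_synonym ('a, 'v) tens = "(int \<times> 'a \<times> int \<times> 'v) list"

definition tpair :: "('a \<Rightarrow> rat) \<Rightarrow> ('v \<Rightarrow> rat) \<Rightarrow> ('a, 'v) tens \<Rightarrow> rat" where
  "tpair \<phi> \<psi> t = (\<Sum>(i, a, j, w)\<leftarrow>t. \<phi> a * \<psi> w)"

definition teq :: "(rat \<Rightarrow> 'a::ab_group_add \<Rightarrow> 'a) \<Rightarrow> (rat \<Rightarrow> 'v::ab_group_add \<Rightarrow> 'v) \<Rightarrow>
    ('a, 'v) tens \<Rightarrow> ('a, 'v) tens \<Rightarrow> bool" where
  "teq sa sv t1 t2 \<longleftrightarrow> (\<forall>\<phi> \<psi>. Vector_Spaces.linear sa (*) \<phi> \<longrightarrow> Vector_Spaces.linear sv (*) \<psi> \<longrightarrow>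
      tpair \<phi> \<psi> t1 = tpair \<phi> \<psi> t2)"

text \<open>Well-formed representative of an element of A^+ (x) V.\<close>
definition tplus :: "(int \<Rightarrow> 'a set) \<Rightarrow> (int \<Rightarrow> 'v set) \<Rightarrow> ('a, 'v) tens \<Rightarrow> bool" where
  "tplus GA GV t \<longleftrightarrow> (\<forall>(i, a, j, w)\<in>set t. 0 < i \<and> a \<in> GA i \<and> w \<in> GV j)"

definition tdeg :: "int \<Rightarrow> ('a, 'v) tens \<Rightarrow> bool" where
  "tdeg n t \<longleftrightarrow> (\<forall>(i, a, j, w)\<in>set t. i + j = n)"

definition tneg :: "('a::uminus, 'v) tens \<Rightarrow> ('a, 'v) tens" where
  "tneg t = map (\<lambda>(i, a, j, w). (i, - a, j, w)) t"

definition tscale :: "(rat \<Rightarrow> 'a \<Rightarrow> 'a) \<Rightarrow> rat \<Rightarrow> ('a, 'v) tens \<Rightarrow> ('a, 'v) tens" where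
  "tscale sa r t = map (\<lambda>(i, a, j, w). (i, sa r a, j, w)) t"

definition tmap :: "('v \<Rightarrow> 'u) \<Rightarrow> ('a, 'v) tens \<Rightarrow> ('a, 'u) tens" where
  "tmap f t = map (\<lambda>(i, a, j, w). (i, a, j, f w)) t"

definition tbr :: "('v \<Rightarrow> 'v \<Rightarrow> 'v) \<Rightarrow> ('a::ring, 'v) tens \<Rightarrow> ('a, 'v) tens \<Rightarrow> ('a, 'v) tens" where
  "tbr br t1 t2 = concat (map (\<lambda>(i1, a1, j1, w1). map (\<lambda>(i2, a2, j2, w2).
      (i1 + i2, gsign (j1 * i2) (a1 * a2), j1 + j2, br w1 w2)) t2) t1)"

definition tdiff :: "('a \<Rightarrow> 'a) \<Rightarrow> ('v \<Rightarrow> 'v) \<Rightarrow> ('a::uminus, 'v) tens \<Rightarrow> ('a, 'v) tens" where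
  "tdiff dA dV t = concat (map (\<lambda>(i, a, j, w). [(i + 1, dA a, j, w), (i, gsign i a, j + 1, dV w)]) t)"

definition tF :: "(rat \<Rightarrow> 'a \<Rightarrow> 'a) \<Rightarrow> ('a \<Rightarrow> 'a) \<Rightarrow> ('v \<Rightarrow> 'v \<Rightarrow> 'v) \<Rightarrow> ('v \<Rightarrow> 'v) \<Rightarrow>
    ('a::ring, 'v) tens \<Rightarrow> ('a, 'v) tens" where
  "tF sa dA br dV t = tdiff dA dV t @ tscale sa (1 / 2) (tbr br t t)"

definition gauge_term :: "(rat \<Rightarrow> 'a \<Rightarrow> 'a) \<Rightarrow> ('a \<Rightarrow> 'a) \<Rightarrow> ('v \<Rightarrow> 'v \<Rightarrow> 'v) \<Rightarrow> ('v \<Rightarrow> 'v) \<Rightarrow>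
    ('a::ring, 'v) tens \<Rightarrow> ('a, 'v) tens \<Rightarrow> nat \<Rightarrow> ('a, 'v) tens" where
  "gauge_term sa dA br dV X \<alpha> k =
     tscale sa (1 / fact (k + 1)) ((tbr br X ^^ k) (tdiff dA dV X @ tbr br \<alpha> X))"

definition gauge_partial :: "(rat \<Rightarrow> 'a \<Rightarrow> 'a) \<Rightarrow> ('a \<Rightarrow> 'a) \<Rightarrow> ('v \<Rightarrow> 'v \<Rightarrow> 'v) \<Rightarrow> ('v \<Rightarrow> 'v) \<Rightarrow>
    ('a::ring, 'v) tens \<Rightarrow> ('a, 'v) tens \<Rightarrow> nat \<Rightarrow> ('a, 'v) tens" where
  "gauge_partial sa dA br dV X \<alpha> M = concat (map (gauge_term sa dA br dV X \<alpha>) [0..<M])"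

text \<open>The series is eventually constant (nilpotency); its value is the partial sum at
  the first index from which the partial sums no longer change in A (x) V.\<close>
definition gauge :: "(rat \<Rightarrow> 'a \<Rightarrow> 'a) \<Rightarrow> (rat \<Rightarrow> 'v::ab_group_add \<Rightarrow> 'v) \<Rightarrow> ('a \<Rightarrow> 'a) \<Rightarrow>
    ('v \<Rightarrow> 'v \<Rightarrow> 'v) \<Rightarrow> ('v \<Rightarrow> 'v) \<Rightarrow> ('a::ring, 'v) tens \<Rightarrow> ('a, 'v) tens \<Rightarrow> ('a, 'v) tens" where
  "gauge sa sv dA br dV X \<alpha> =
     \<alpha> @ tneg (gauge_partial sa dA br dV X \<alpha>
        (LEAST M. \<forall>M'\<ge>M. teq sa sv (gauge_partial sa dA br dV X \<alpha> M') (gauge_partial sa dA br dV X \<alpha> M)))"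

definition defining_system :: "(rat \<Rightarrow> 'a \<Rightarrow> 'a) \<Rightarrow> (int \<Rightarrow> 'a set) \<Rightarrow> ('a \<Rightarrow> 'a) \<Rightarrow>
    (rat \<Rightarrow> 'v::ab_group_add \<Rightarrow> 'v) \<Rightarrow> (int \<Rightarrow> 'v set) \<Rightarrow> ('v \<Rightarrow> 'v \<Rightarrow> 'v) \<Rightarrow> ('v \<Rightarrow> 'v) \<Rightarrow>
    ('a::ring, 'v) tens \<Rightarrow> bool" where
  "defining_system sa GA dA sv GV br dV \<alpha> \<longleftrightarrow>
     tplus GA GV \<alpha> \<and> tdeg 1 \<alpha> \<and> teq sa sv (tF sa dA br dV \<alpha>) []"

definition coh_class :: "(int \<Rightarrow> 'a set) \<Rightarrow> ('a \<Rightarrow> 'a) \<Rightarrow> int \<Rightarrow> 'a::ab_group_add \<Rightarrow> 'a set" where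
  "coh_class GA dA n c = {c + dA b | b. b \<in> GA (n - 1)}"

text \<open>c represents F(alpha~) under A^+ (x) Z = A^+[q], c (x) z |-> c, for some degree-one lift
  alpha~ in A^+ (x) Lt of alpha.\<close>
definition mc_rep :: "(rat \<Rightarrow> 'a \<Rightarrow> 'a) \<Rightarrow> (int \<Rightarrow> 'a set) \<Rightarrow> ('a \<Rightarrow> 'a) \<Rightarrow>
   (rat \<Rightarrow> 'm::ab_group_add \<Rightarrow> 'm) \<Rightarrow> (int \<Rightarrow> 'm set) \<Rightarrow> ('m \<Rightarrow> 'm \<Rightarrow> 'm) \<Rightarrow> ('m \<Rightarrow> 'm) \<Rightarrow>
   (rat \<Rightarrow> 'l::ab_group_add \<Rightarrow> 'l) \<Rightarrow> ('m \<Rightarrow> 'l) \<Rightarrow> int \<Rightarrow> 'm \<Rightarrow>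
   ('a::ring, 'l) tens \<Rightarrow> 'a \<Rightarrow> bool" where
  "mc_rep sa GA dA st Gt brt dt s \<pi> q z \<alpha> c \<longleftrightarrow>
     (\<exists>\<alpha>t. tplus GA Gt \<alpha>t \<and> tdeg 1 \<alpha>t \<and> teq sa s (tmap \<pi> \<alpha>t) \<alpha> \<and>
        c \<in> GA (2 - q) \<and> teq sa st (tF sa dA brt dt \<alpha>t) [(2 - q, c, q, z)])"

definition mc_product :: "(rat \<Rightarrow> 'a \<Rightarrow> 'a) \<Rightarrow> (int \<Rightarrow> 'a set) \<Rightarrow> ('a \<Rightarrow> 'a) \<Rightarrow>
   (rat \<Rightarrow> 'm::ab_group_add \<Rightarrow> 'm) \<Rightarrow> (int \<Rightarrow> 'm set) \<Rightarrow> ('m \<Rightarrow> 'm \<Rightarrow> 'm) \<Rightarrow> ('m \<Rightarrow> 'm) \<Rightarrow>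
   (rat \<Rightarrow> 'l::ab_group_add \<Rightarrow> 'l) \<Rightarrow> ('m \<Rightarrow> 'l) \<Rightarrow> int \<Rightarrow> 'm \<Rightarrow>
   ('a::ring, 'l) tens \<Rightarrow> 'a set" where
  "mc_product sa GA dA st Gt brt dt s \<pi> q z \<alpha> =
     (THE C. \<exists>c. mc_rep sa GA dA st Gt brt dt s \<pi> q z \<alpha> c \<and> C = coh_class GA dA (2 - q) c)"

end

theory Submission
  imports Defs
begin



lemma gsign_add: "gsign k (x + y) = gsign k x + gsign k (y::'v::ab_group_add)"
  by (simp add: gsign_def)
lemma gsign_0[simp]: "gsign k (0::'v::ab_group_add) = 0"
  by (simp add: gsign_def)
lemma gsign_neg: "gsign k (- x) = - gsign k (x::'v::ab_group_add)"
  by (simp add: gsign_def)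
lemma gsign_gsign: "gsign k (gsign k x) = (x::'v::ab_group_add)"
  by (simp add: gsign_def)
lemma gsign_even[simp]: "even k \<Longrightarrow> gsign k x = x"
  by (simp add: gsign_def)
lemma gsign_odd[simp]: "odd k \<Longrightarrow> gsign k x = - x"
  by (simp add: gsign_def)
lemma gsign_sum: "gsign k (sum f S) = (\<Sum>i\<in>S. gsign k (f i :: 'v::ab_group_add))"
  by (simp add: gsign_def sum_negf)

lemma gsign_rat: "gsign k (r::rat) = (if even k then 1 else -1) * r"
  by (simp add: gsign_def)

definition gvdec :: "(int \<Rightarrow> 'v::ab_group_add set) \<Rightarrow> 'v \<Rightarrow> int \<Rightarrow> 'v" where
  "gvdec G x = (THE f. finite {i. f i \<noteq> 0} \<and> (\<forall>i. f i \<in> G i) \<and> x = (\<Sum>i\<in>{i. f i \<noteq> 0}. f i))"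

definition gpar :: "(int \<Rightarrow> 'v::ab_group_add set) \<Rightarrow> 'v \<Rightarrow> 'v" where
  "gpar G x = (\<Sum>i\<in>{i. gvdec G x i \<noteq> 0}. gsign i (gvdec G x i))"

context
  fixes s :: "rat \<Rightarrow> 'v::ab_group_add \<Rightarrow> 'v" and G
  assumes gv: "graded_vs s G"
begin

lemma gv_vs: "vector_space s" using gv by (simp add: graded_vs_def)

interpretation V: vector_space s by (rule gv_vs)

lemma gv_sub: "V.subspace (G i)" using gv by (simp add: graded_vs_def)

lemma gv_0: "0 \<in> G i" using gv_sub V.subspace_0 by blast
lemma gv_add: "x \<in> G i \<Longrightarrow> y \<in> G i \<Longrightarrow> x + y \<in> G i" using gv_sub V.subspace_add by blast
lemma gv_scale: "x \<in> G i \<Longrightarrow> s c x \<in> G i" using gv_sub V.subspace_scale by blast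
lemma gv_neg: "x \<in> G i \<Longrightarrow> - x \<in> G i" using gv_sub V.subspace_neg by blast
lemma gv_gsign: "x \<in> G i \<Longrightarrow> gsign k x \<in> G i" using gv_neg by (simp add: gsign_def)
lemma gv_sum: "(\<And>x. x \<in> S \<Longrightarrow> f x \<in> G i) \<Longrightarrow> sum f S \<in> G i"
  using gv_sub V.subspace_sum by blast

lemma gvdec_prop: "finite {i. gvdec G x i \<noteq> 0} \<and> (\<forall>i. gvdec G x i \<in> G i) \<and>
     x = (\<Sum>i\<in>{i. gvdec G x i \<noteq> 0}. gvdec G x i)"
proof -
  have "\<exists>!f. finite {i. f i \<noteq> 0} \<and> (\<forall>i. f i \<in> G i) \<and> x = (\<Sum>i\<in>{i. f i \<noteq> 0}. f i)"
    using gv by (simp add: graded_vs_def)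
  then show ?thesis unfolding gvdec_def by (rule theI')
qed

lemma gvdec_in: "gvdec G x i \<in> G i" using gvdec_prop by blast

lemma gvdec_eqI:
  assumes "finite S" "\<And>i. i \<notin> S \<Longrightarrow> f i = 0" "\<And>i. f i \<in> G i" "x = (\<Sum>i\<in>S. f i)"
  shows "gvdec G x = f"
proof -
  have ex: "\<exists>!f. finite {i. f i \<noteq> 0} \<and> (\<forall>i. f i \<in> G i) \<and> x = (\<Sum>i\<in>{i. f i \<noteq> 0}. f i)"
    using gv by (simp add: graded_vs_def)
  have sub: "{i. f i \<noteq> 0} \<subseteq> S" using assms(2) by blast
  have fin: "finite {i. f i \<noteq> 0}" using sub assms(1) finite_subset by blast
  have "(\<Sum>i\<in>S. f i) = (\<Sum>i\<in>{i. f i \<noteq> 0}. f i)"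
    by (rule sum.mono_neutral_right[OF assms(1) sub]) auto
  then have P: "finite {i. f i \<noteq> 0} \<and> (\<forall>i. f i \<in> G i) \<and> x = (\<Sum>i\<in>{i. f i \<noteq> 0}. f i)"
    using fin assms(3,4) by auto
  show ?thesis using ex P gvdec_prop by blast
qed

lemma gvdec_sum_sup:
  assumes "finite S" "{i. gvdec G x i \<noteq> 0} \<subseteq> S"
  shows "x = (\<Sum>i\<in>S. gvdec G x i)"
proof -
  have "(\<Sum>i\<in>S. gvdec G x i) = (\<Sum>i\<in>{i. gvdec G x i \<noteq> 0}. gvdec G x i)"
    by (rule sum.mono_neutral_right[OF assms(1) assms(2)]) auto
  then show ?thesis using gvdec_prop by simp
qed

lemma gvdec_add: "gvdec G (x + y) = (\<lambda>i. gvdec G x i + gvdec G y i)"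
proof (rule gvdec_eqI)
  let ?S = "{i. gvdec G x i \<noteq> 0} \<union> {i. gvdec G y i \<noteq> 0}"
  show "finite ?S" using gvdec_prop by blast
  show "\<And>i. i \<notin> ?S \<Longrightarrow> gvdec G x i + gvdec G y i = 0" by auto
  show "\<And>i. gvdec G x i + gvdec G y i \<in> G i" using gvdec_in gv_add by blast
  have "x = (\<Sum>i\<in>?S. gvdec G x i)" by (rule gvdec_sum_sup) (use gvdec_prop in auto)
  moreover have "y = (\<Sum>i\<in>?S. gvdec G y i)" by (rule gvdec_sum_sup) (use gvdec_prop in auto)
  ultimately show "x + y = (\<Sum>i\<in>?S. gvdec G x i + gvdec G y i)"
    by (simp add: sum.distrib)
qed

lemma gvdec_scale: "gvdec G (s c x) = (\<lambda>i. s c (gvdec G x i))"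
proof (rule gvdec_eqI)
  let ?S = "{i. gvdec G x i \<noteq> 0}"
  show "finite ?S" using gvdec_prop by blast
  show "\<And>i. i \<notin> ?S \<Longrightarrow> s c (gvdec G x i) = 0" by auto
  show "\<And>i. s c (gvdec G x i) \<in> G i" using gvdec_in gv_scale by blast
  have "x = (\<Sum>i\<in>?S. gvdec G x i)" using gvdec_prop by blast
  then show "s c x = (\<Sum>i\<in>?S. s c (gvdec G x i))"
    by (metis V.scale_sum_right)
qed

lemma gvdec_hom: "x \<in> G j \<Longrightarrow> gvdec G x = (\<lambda>i. if i = j then x else 0)"
  by (rule gvdec_eqI[where S="{j}"]) (auto simp: gv_0)

lemma gpar_sup:
  assumes "finite S" "{i. gvdec G x i \<noteq> 0} \<subseteq> S"
  shows "gpar G x = (\<Sum>i\<in>S. gsign i (gvdec G x i))"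
  unfolding gpar_def
  by (rule sum.mono_neutral_left[OF assms(1) assms(2)]) auto

lemma gpar_hom: "x \<in> G j \<Longrightarrow> gpar G x = gsign j x"
  by (subst gpar_sup[where S="{j}"]) (auto simp: gvdec_hom)

lemma gpar_add: "gpar G (x + y) = gpar G x + gpar G y"
proof -
  let ?S = "{i. gvdec G x i \<noteq> 0} \<union> {i. gvdec G y i \<noteq> 0}"
  have f: "finite ?S" using gvdec_prop by blast
  have "gpar G (x + y) = (\<Sum>i\<in>?S. gsign i (gvdec G (x+y) i))"
    by (rule gpar_sup[OF f]) (auto simp: gvdec_add)
  also have "\<dots> = (\<Sum>i\<in>?S. gsign i (gvdec G x i)) + (\<Sum>i\<in>?S. gsign i (gvdec G y i))"
    by (simp add: gvdec_add gsign_add sum.distrib)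
  also have "\<dots> = gpar G x + gpar G y"
    by (simp add: gpar_sup[OF f])
  finally show ?thesis .
qed

lemma gsign_scale: "gsign k (s c x) = s c (gsign k x)"
  by (simp add: gsign_def)

lemma gpar_scale: "gpar G (s c x) = s c (gpar G x)"
proof -
  let ?S = "{i. gvdec G x i \<noteq> 0}"
  have f: "finite ?S" using gvdec_prop by blast
  have "gpar G (s c x) = (\<Sum>i\<in>?S. gsign i (gvdec G (s c x) i))"
    by (rule gpar_sup[OF f]) (auto simp: gvdec_scale)
  also have "\<dots> = s c (gpar G x)"
    by (simp add: gvdec_scale gsign_scale gpar_def V.scale_sum_right)
  finally show ?thesis .
qed

lemma gpar_linear: "Vector_Spaces.linear s s (gpar G)"
  by (rule Vector_Spaces.linear_iff[THEN iffD2]) (use gv_vs gpar_add gpar_scale in blast)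

lemma gvdec_linear: "Vector_Spaces.linear s s (\<lambda>x. gvdec G x j)"
  by (rule Vector_Spaces.linear_iff[THEN iffD2]) (use gv_vs in \<open>simp add: gvdec_add gvdec_scale\<close>)

lemma gv_unique_deg: "x \<in> G i \<Longrightarrow> x \<in> G j \<Longrightarrow> i \<noteq> j \<Longrightarrow> x = 0"
  using gvdec_hom by metis

end




fun pv :: "('a \<Rightarrow> rat) \<Rightarrow> ('v \<Rightarrow> rat) \<Rightarrow> int \<times> 'a \<times> int \<times> 'v \<Rightarrow> rat" where
  "pv \<phi> \<psi> (i, a, j, w) = \<phi> a * \<psi> w"

fun cb :: "('v \<Rightarrow> 'v \<Rightarrow> 'v) \<Rightarrow> int \<times> 'a::ring \<times> int \<times> 'v \<Rightarrow> int \<times> 'a \<times> int \<times> 'v \<Rightarrow> int \<times> 'a \<times> int \<times> 'v" where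
  "cb br (i1, a1, j1, w1) (i2, a2, j2, w2) = (i1 + i2, gsign (j1 * i2) (a1 * a2), j1 + j2, br w1 w2)"

fun dd1 :: "('a \<Rightarrow> 'a) \<Rightarrow> int \<times> 'a \<times> int \<times> 'v \<Rightarrow> int \<times> 'a \<times> int \<times> 'v" where
  "dd1 dA (i, a, j, w) = (i + 1, dA a, j, w)"
fun dd2 :: "('v \<Rightarrow> 'v) \<Rightarrow> int \<times> 'a::uminus \<times> int \<times> 'v \<Rightarrow> int \<times> 'a \<times> int \<times> 'v" where
  "dd2 dV (i, a, j, w) = (i, gsign i a, j + 1, dV w)"

lemma pv_eq: "(\<lambda>(i, a, j, w). \<phi> a * \<psi> w) = pv \<phi> \<psi>"
  by (auto simp: fun_eq_iff)

lemma tpair_pv: "tpair \<phi> \<psi> t = (\<Sum>e\<leftarrow>t. pv \<phi> \<psi> e)"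
  unfolding tpair_def pv_eq ..

lemma tpair_Nil[simp]: "tpair \<phi> \<psi> [] = 0" by (simp add: tpair_def)
lemma tpair_append[simp]: "tpair \<phi> \<psi> (t1 @ t2) = tpair \<phi> \<psi> t1 + tpair \<phi> \<psi> t2"
  by (simp add: tpair_pv)
lemma tpair_concat: "tpair \<phi> \<psi> (concat ts) = (\<Sum>t\<leftarrow>ts. tpair \<phi> \<psi> t)"
  by (induct ts) auto
lemma tpair_Cons: "tpair \<phi> \<psi> (e # t) = pv \<phi> \<psi> e + tpair \<phi> \<psi> t"
  by (simp add: tpair_pv)

lemma tbr_cb: "tbr br t1 t2 = concat (map (\<lambda>e1. map (cb br e1) t2) t1)"
proof -
  have "(\<lambda>(i1, a1, j1, w1). map (\<lambda>(i2, a2, j2, w2).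
      (i1 + i2, gsign (j1 * i2) (a1 * a2), j1 + j2, br w1 w2)) t2) = (\<lambda>e1. map (cb br e1) t2)"
    by (auto simp: fun_eq_iff intro!: map_cong)
  then show ?thesis unfolding tbr_def by simp
qed

lemma tdiff_dd: "tdiff dA dV t = concat (map (\<lambda>e. [dd1 dA e, dd2 dV e]) t)"
proof -
  have "(\<lambda>(i, a, j, w). [(i + 1, dA a, j, w), (i, gsign i a, j + 1, dV w)]) = (\<lambda>e. [dd1 dA e, dd2 dV e])"
    by (auto simp: fun_eq_iff)
  then show ?thesis unfolding tdiff_def by simp
qed

lemma tpair_tbr: "tpair \<phi> \<psi> (tbr br t1 t2) = (\<Sum>e1\<leftarrow>t1. \<Sum>e2\<leftarrow>t2. pv \<phi> \<psi> (cb br e1 e2))"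
  unfolding tbr_cb by (induct t1) (auto simp: tpair_pv o_def)

lemma tpair_tdiff: "tpair \<phi> \<psi> (tdiff dA dV t) = (\<Sum>e\<leftarrow>t. pv \<phi> \<psi> (dd1 dA e) + pv \<phi> \<psi> (dd2 dV e))"
  unfolding tdiff_dd by (induct t) (auto simp: tpair_pv)

lemma sum_list_swap: "(\<Sum>x\<leftarrow>xs. \<Sum>y\<leftarrow>ys. f x y) = (\<Sum>y\<leftarrow>ys. \<Sum>x\<leftarrow>xs. (f x y :: 'b::comm_monoid_add))"
  by (induct xs) (auto simp: sum_list_addf)

lemma sum_list_mult_left: "c * (\<Sum>x\<leftarrow>xs. f x) = (\<Sum>x\<leftarrow>xs. c * (f x :: rat))"
  by (induct xs) (auto simp: algebra_simps)

definition lf :: "(rat \<Rightarrow> 'v::ab_group_add \<Rightarrow> 'v) \<Rightarrow> ('v \<Rightarrow> rat) \<Rightarrow> bool" where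
  "lf s f \<longleftrightarrow> (\<forall>x y. f (x + y) = f x + f y) \<and> (\<forall>c x. f (s c x) = c * f x)"

lemma vs_rat: "vector_space ((*) :: rat \<Rightarrow> rat \<Rightarrow> rat)"
  by unfold_locales (auto simp: algebra_simps)

lemma linear_lf: "vector_space s \<Longrightarrow> Vector_Spaces.linear s (*) f \<longleftrightarrow> lf s f"
  unfolding Vector_Spaces.linear_iff lf_def using vs_rat by auto

lemma lf_add: "lf s f \<Longrightarrow> f (x + y) = f x + f y" by (simp add: lf_def)
lemma lf_scale: "lf s f \<Longrightarrow> f (s c x) = c * f x" by (simp add: lf_def)
lemma lf_0: "lf s f \<Longrightarrow> f 0 = 0"
  using lf_add[of s f 0 0] by simp
lemma lf_neg: "lf s f \<Longrightarrow> f (- x) = - f x"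
  using lf_add[of s f x "- x"] lf_0[of s f] by (simp add: eq_neg_iff_add_eq_0)
lemma lf_diff: "lf s f \<Longrightarrow> f (x - y) = f x - f y"
  using lf_add[of s f x "- y"] lf_neg[of s f y] by simp
lemma lf_gsign: "lf s f \<Longrightarrow> f (gsign k x) = gsign k (f x)"
  by (simp add: gsign_def lf_neg)
lemma lf_sum: "lf s f \<Longrightarrow> f (sum g S) = (\<Sum>i\<in>S. f (g i))"
  by (induct S rule: infinite_finite_induct) (auto simp: lf_0 lf_add)

lemma lf_comp: "Vector_Spaces.linear s1 s2 g \<Longrightarrow> lf s2 f \<Longrightarrow> lf s1 (\<lambda>x. f (g x))"
  unfolding lf_def Vector_Spaces.linear_iff by auto

lemma lf_plus: "lf s f \<Longrightarrow> lf s g \<Longrightarrow> lf s (\<lambda>x. f x + g x)"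
  unfolding lf_def by (auto simp: algebra_simps)
lemma lf_cmult: "lf s f \<Longrightarrow> lf s (\<lambda>x. c * f x)"
  unfolding lf_def by (auto simp: algebra_simps)
lemma lf_if: "lf s f \<Longrightarrow> lf s g \<Longrightarrow> lf s (if P then f else g)"
  by auto

lemma teq_iff: "vector_space sa \<Longrightarrow> vector_space sv \<Longrightarrow>
   teq sa sv t1 t2 \<longleftrightarrow> (\<forall>\<phi> \<psi>. lf sa \<phi> \<longrightarrow> lf sv \<psi> \<longrightarrow> tpair \<phi> \<psi> t1 = tpair \<phi> \<psi> t2)"
  unfolding teq_def by (simp add: linear_lf)

lemma tpair_tneg: "lf sa \<phi> \<Longrightarrow> tpair \<phi> \<psi> (tneg t) = - tpair \<phi> \<psi> t"
  by (induct t) (auto simp: tneg_def tpair_Cons lf_neg)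

lemma tpair_tscale: "lf sa \<phi> \<Longrightarrow> tpair \<phi> \<psi> (tscale sa c t) = c * tpair \<phi> \<psi> t"
  by (induct t) (auto simp: tscale_def tpair_Cons lf_scale algebra_simps)

lemma tpair_tmap: "tpair \<phi> \<psi> (tmap f t) = tpair \<phi> (\<lambda>x. \<psi> (f x)) t"
  by (induct t) (auto simp: tmap_def tpair_Cons)




locale tal =
  fixes sa :: "rat \<Rightarrow> 'a::ring \<Rightarrow> 'a" and GA :: "int \<Rightarrow> 'a set" and dA :: "'a \<Rightarrow> 'a"
    and s :: "rat \<Rightarrow> 'v::ab_group_add \<Rightarrow> 'v" and G :: "int \<Rightarrow> 'v set"
    and br :: "'v \<Rightarrow> 'v \<Rightarrow> 'v" and d :: "'v \<Rightarrow> 'v"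
  assumes cdga: "cdga sa GA dA" and dgla: "dgla s G br d"
begin

lemma gA: "graded_vs sa GA" using cdga[unfolded cdga_def, THEN conjunct1] by blast
lemma gV: "graded_vs s G" using dgla[unfolded dgla_def, THEN conjunct1] by blast
lemma vsA: "vector_space sa" using gv_vs[OF gA] .
lemma vsV: "vector_space s" using gv_vs[OF gV] .

lemma mscale1: "sa r (x * y) = sa r x * y" using cdga[unfolded cdga_def, THEN conjunct2, THEN conjunct2, THEN conjunct1] by blast
lemma mscale2: "sa r (x * y) = x * sa r y" using cdga[unfolded cdga_def, THEN conjunct2, THEN conjunct2, THEN conjunct1] by blast
lemma mdeg: "x \<in> GA i \<Longrightarrow> y \<in> GA j \<Longrightarrow> x * y \<in> GA (i + j)" using cdga[unfolded cdga_def, THEN conjunct2, THEN conjunct2, THEN conjunct2, THEN conjunct2, THEN conjunct1] by blast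
lemma mcomm: "x \<in> GA i \<Longrightarrow> y \<in> GA j \<Longrightarrow> x * y = gsign (i * j) (y * x)" using cdga[unfolded cdga_def, THEN conjunct2, THEN conjunct2, THEN conjunct2, THEN conjunct2, THEN conjunct2, THEN conjunct1] by blast
lemma dA_lin: "Vector_Spaces.linear sa sa dA" using cdga[unfolded cdga_def, THEN conjunct2, THEN conjunct2, THEN conjunct2, THEN conjunct2, THEN conjunct2, THEN conjunct2, THEN conjunct1] by blast
lemma dA_deg: "x \<in> GA i \<Longrightarrow> dA x \<in> GA (i + 1)" using cdga[unfolded cdga_def, THEN conjunct2, THEN conjunct2, THEN conjunct2, THEN conjunct2, THEN conjunct2, THEN conjunct2, THEN conjunct2, THEN conjunct1] by blast
lemma dA_dd: "dA (dA x) = 0" using cdga[unfolded cdga_def, THEN conjunct2, THEN conjunct2, THEN conjunct2, THEN conjunct2, THEN conjunct2, THEN conjunct2, THEN conjunct2, THEN conjunct2, THEN conjunct1] by blast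
lemma dA_leib: "x \<in> GA i \<Longrightarrow> dA (x * y) = dA x * y + gsign i (x * dA y)" using cdga[unfolded cdga_def, THEN conjunct2, THEN conjunct2, THEN conjunct2, THEN conjunct2, THEN conjunct2, THEN conjunct2, THEN conjunct2, THEN conjunct2, THEN conjunct2] by blast

lemma br_lin1: "Vector_Spaces.linear s s (br x)" using dgla[unfolded dgla_def, THEN conjunct2, THEN conjunct1] by blast
lemma br_lin2: "Vector_Spaces.linear s s (\<lambda>x. br x y)" using dgla[unfolded dgla_def, THEN conjunct2, THEN conjunct2, THEN conjunct1] by blast
lemma br_deg: "x \<in> G i \<Longrightarrow> y \<in> G j \<Longrightarrow> br x y \<in> G (i + j)" using dgla[unfolded dgla_def, THEN conjunct2, THEN conjunct2, THEN conjunct2, THEN conjunct1] by blast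
lemma br_anti: "x \<in> G i \<Longrightarrow> y \<in> G j \<Longrightarrow> br x y = - gsign (i * j) (br y x)" using dgla[unfolded dgla_def, THEN conjunct2, THEN conjunct2, THEN conjunct2, THEN conjunct2, THEN conjunct1] by blast
lemma br_jac: "x \<in> G i \<Longrightarrow> y \<in> G j \<Longrightarrow> br x (br y z) = br (br x y) z + gsign (i * j) (br y (br x z))"
  using dgla unfolding dgla_def by blast
lemma d_lin: "Vector_Spaces.linear s s d" using dgla[unfolded dgla_def, THEN conjunct2, THEN conjunct2, THEN conjunct2, THEN conjunct2, THEN conjunct2, THEN conjunct2, THEN conjunct1] by blast
lemma d_deg: "x \<in> G i \<Longrightarrow> d x \<in> G (i + 1)" using dgla[unfolded dgla_def, THEN conjunct2, THEN conjunct2, THEN conjunct2, THEN conjunct2, THEN conjunct2, THEN conjunct2, THEN conjunct2, THEN conjunct1] by blast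
lemma d_dd: "d (d x) = 0" using dgla[unfolded dgla_def, THEN conjunct2, THEN conjunct2, THEN conjunct2, THEN conjunct2, THEN conjunct2, THEN conjunct2, THEN conjunct2, THEN conjunct2, THEN conjunct1] by blast
lemma d_leib: "x \<in> G i \<Longrightarrow> d (br x y) = br (d x) y + gsign i (br x (d y))" using dgla[unfolded dgla_def, THEN conjunct2, THEN conjunct2, THEN conjunct2, THEN conjunct2, THEN conjunct2, THEN conjunct2, THEN conjunct2, THEN conjunct2, THEN conjunct2] by blast

lemma lin_add: "Vector_Spaces.linear s1 s2 f \<Longrightarrow> f (x + y) = f x + f y"
  unfolding Vector_Spaces.linear_iff by blast
lemma lin_scale: "Vector_Spaces.linear s1 s2 f \<Longrightarrow> f (s1 c x) = s2 c (f x)"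
  unfolding Vector_Spaces.linear_iff by blast
lemma lin_0: "Vector_Spaces.linear s1 s2 f \<Longrightarrow> f 0 = 0"
  using lin_add[of s1 s2 f 0 0] by simp
lemma lin_neg: "Vector_Spaces.linear s1 s2 f \<Longrightarrow> f (- x) = - f x"
  using lin_add[of s1 s2 f x "- x"] lin_0[of s1 s2 f] by (simp add: eq_neg_iff_add_eq_0 add.commute)
lemma lin_gsign: "Vector_Spaces.linear s1 s2 f \<Longrightarrow> f (gsign k x) = gsign k (f x)"
  by (simp add: gsign_def lin_neg)

lemma dA_add: "dA (x + y) = dA x + dA y" by (rule lin_add[OF dA_lin])
lemma dA_0: "dA 0 = 0" by (rule lin_0[OF dA_lin])
lemma dA_gsign: "dA (gsign k x) = gsign k (dA x)" by (rule lin_gsign[OF dA_lin])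
lemma d_add: "d (x + y) = d x + d y" by (rule lin_add[OF d_lin])
lemma d_0: "d 0 = 0" by (rule lin_0[OF d_lin])
lemma d_gsign: "d (gsign k x) = gsign k (d x)" by (rule lin_gsign[OF d_lin])
lemma br_add1: "br x (y + z) = br x y + br x z" by (rule lin_add[OF br_lin1])
lemma br_add2: "br (x + y) z = br x z + br y z" using lin_add[OF br_lin2] by blast
lemma br_01: "br x 0 = 0" by (rule lin_0[OF br_lin1])
lemma br_02: "br 0 x = 0" using lin_0[OF br_lin2] by blast
lemma br_gsign1: "br x (gsign k y) = gsign k (br x y)" by (rule lin_gsign[OF br_lin1])
lemma br_gsign2: "br (gsign k x) y = gsign k (br x y)" using lin_gsign[OF br_lin2] by blast
lemma br_neg1: "br x (- y) = - br x y" by (rule lin_neg[OF br_lin1])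
lemma br_neg2: "br (- x) y = - br x y" using lin_neg[OF br_lin2] by blast
lemma m_gsign1: "(gsign k x) * y = gsign k (x * (y::'a))" by (simp add: gsign_def)
lemma m_gsign2: "x * (gsign k y) = gsign k (x * (y::'a))" by (simp add: gsign_def)

lemma lmult_lin: "Vector_Spaces.linear sa sa (\<lambda>x. a * x)"
  unfolding Vector_Spaces.linear_iff using vsA by (auto simp: distrib_left mscale2)
lemma rmult_lin: "Vector_Spaces.linear sa sa (\<lambda>x. x * a)"
  unfolding Vector_Spaces.linear_iff using vsA by (auto simp: distrib_right mscale1)

abbreviation T where "T \<equiv> tplus GA G"
abbreviation teqL (infix \<open>\<approx>\<close> 50) where "t1 \<approx> t2 \<equiv> teq sa s t1 t2"

lemma teqI: "(\<And>\<phi> \<psi>. lf sa \<phi> \<Longrightarrow> lf s \<psi> \<Longrightarrow> tpair \<phi> \<psi> t1 = tpair \<phi> \<psi> t2) \<Longrightarrow> t1 \<approx> t2"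
  using teq_iff[OF vsA vsV] by blast
lemma teqD: "t1 \<approx> t2 \<Longrightarrow> lf sa \<phi> \<Longrightarrow> lf s \<psi> \<Longrightarrow> tpair \<phi> \<psi> t1 = tpair \<phi> \<psi> t2"
  using teq_iff[OF vsA vsV] by blast

lemma teq_refl: "t \<approx> t" by (rule teqI) simp
lemma teq_sym: "t1 \<approx> t2 \<Longrightarrow> t2 \<approx> t1"
proof (rule teqI)
  fix \<phi> \<psi> assume "t1 \<approx> t2" "lf sa \<phi>" "lf s \<psi>"
  then show "tpair \<phi> \<psi> t2 = tpair \<phi> \<psi> t1" using teqD by metis
qed
lemma teq_trans[trans]: "t1 \<approx> t2 \<Longrightarrow> t2 \<approx> t3 \<Longrightarrow> t1 \<approx> t3"
proof (rule teqI)
  fix \<phi> \<psi> assume "t1 \<approx> t2" "t2 \<approx> t3" "lf sa \<phi>" "lf s \<psi>"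
  then show "tpair \<phi> \<psi> t1 = tpair \<phi> \<psi> t3" using teqD by metis
qed

lemma T_def2: "T t \<longleftrightarrow> (\<forall>e\<in>set t. case e of (i, a, j, w) \<Rightarrow> 0 < i \<and> a \<in> GA i \<and> w \<in> G j)"
  unfolding tplus_def by auto
lemma T3: "T t \<longleftrightarrow> (\<forall>i a j w. (i,a,j,w) \<in> set t \<longrightarrow> 0 < i \<and> a \<in> GA i \<and> w \<in> G j)"
  unfolding tplus_def by fastforce
lemma D3: "tdeg n t \<longleftrightarrow> (\<forall>i a j w. (i,a,j,w) \<in> set t \<longrightarrow> i + j = n)"
  unfolding tdeg_def by fastforce

lemma T_Nil[simp]: "T []" by (simp add: T3)
lemma T_append[simp]: "T (t1 @ t2) \<longleftrightarrow> T t1 \<and> T t2" unfolding T3 by auto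
lemma T_concat: "(\<And>t. t \<in> set ts \<Longrightarrow> T t) \<Longrightarrow> T (concat ts)" unfolding T3 by auto
lemma T_tneg: "T t \<Longrightarrow> T (tneg t)" unfolding T3 tneg_def by (auto simp: gv_neg[OF gA])
lemma T_tscale: "T t \<Longrightarrow> T (tscale sa c t)" unfolding T3 tscale_def by (auto simp: gv_scale[OF gA])
lemma T_tbr: "T t1 \<Longrightarrow> T t2 \<Longrightarrow> T (tbr br t1 t2)"
  unfolding T3 tbr_def by (clarsimp; meson add_pos_pos gv_gsign[OF gA] mdeg br_deg)
lemma T_tdiff: "T t \<Longrightarrow> T (tdiff dA d t)"
  unfolding T3 tdiff_def by (fastforce simp: gv_gsign[OF gA] dA_deg d_deg)

lemma D_Nil[simp]: "tdeg n []" by (simp add: D3)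
lemma D_append[simp]: "tdeg n (t1 @ t2) \<longleftrightarrow> tdeg n t1 \<and> tdeg n t2" unfolding D3 set_append by blast
lemma D_concat: "(\<And>t. t \<in> set ts \<Longrightarrow> tdeg n t) \<Longrightarrow> tdeg n (concat ts)" unfolding D3 set_concat by blast
lemma D_tneg: "tdeg n t \<Longrightarrow> tdeg n (tneg t)" unfolding D3 tneg_def by auto
lemma D_tscale: "tdeg n t \<Longrightarrow> tdeg n (tscale sa c t)" unfolding D3 tscale_def by auto
lemma D_tbr: "tdeg m t1 \<Longrightarrow> tdeg n t2 \<Longrightarrow> tdeg (m + n) (tbr br t1 t2)"
  unfolding D3 tbr_def by (clarsimp, metis add.assoc add.commute add.left_commute)
lemma D_tdiff: "tdeg n t \<Longrightarrow> tdeg (n + 1) (tdiff dA d t)"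
  unfolding D3 tdiff_def by fastforce

fun phR :: "('a \<Rightarrow> rat) \<Rightarrow> int \<times> 'a \<times> int \<times> 'v \<Rightarrow> 'a \<Rightarrow> rat" where
  "phR \<phi> (i1, a1, j1, w1) = (if even j1 then (\<lambda>a. \<phi> (a1 * a)) else (\<lambda>a. \<phi> (a1 * gpar GA a)))"
fun psR :: "('v \<Rightarrow> rat) \<Rightarrow> int \<times> 'a \<times> int \<times> 'v \<Rightarrow> 'v \<Rightarrow> rat" where
  "psR \<psi> (i1, a1, j1, w1) = (\<lambda>w. \<psi> (br w1 w))"
fun phL :: "('a \<Rightarrow> rat) \<Rightarrow> int \<times> 'a \<times> int \<times> 'v \<Rightarrow> 'a \<Rightarrow> rat" where
  "phL \<phi> (i2, a2, j2, w2) = (\<lambda>a. \<phi> (a * a2))"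
fun psL :: "('v \<Rightarrow> rat) \<Rightarrow> int \<times> 'a \<times> int \<times> 'v \<Rightarrow> 'v \<Rightarrow> rat" where
  "psL \<psi> (i2, a2, j2, w2) = (if even i2 then (\<lambda>w. \<psi> (br w w2)) else (\<lambda>w. \<psi> (br (gpar G w) w2)))"

lemma lf_phR: "lf sa \<phi> \<Longrightarrow> lf sa (phR \<phi> e)"
proof (cases e)
  case (fields i1 a1 j1 w1)
  assume l: "lf sa \<phi>"
  have l1: "lf sa (\<lambda>a. \<phi> (a1 * a))" by (rule lf_comp[OF lmult_lin l])
  have l2: "lf sa (\<lambda>a. \<phi> (a1 * gpar GA a))"
    using lf_comp[OF gpar_linear[OF gA] l1] .
  show ?thesis using l1 l2 fields by simp
qed

lemma lf_psR: "lf s \<psi> \<Longrightarrow> lf s (psR \<psi> e)"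
  by (cases e) (simp add: lf_comp[OF br_lin1])

lemma lf_phL: "lf sa \<phi> \<Longrightarrow> lf sa (phL \<phi> e)"
  by (cases e) (simp add: lf_comp[OF rmult_lin])

lemma lf_psL: "lf s \<psi> \<Longrightarrow> lf s (psL \<psi> e)"
proof (cases e)
  case (fields i2 a2 j2 w2)
  assume l: "lf s \<psi>"
  have l1: "lf s (\<lambda>w. \<psi> (br w w2))" by (rule lf_comp[OF br_lin2 l])
  have l2: "lf s (\<lambda>w. \<psi> (br (gpar G w) w2))"
    using lf_comp[OF gpar_linear[OF gV] l1] .
  show ?thesis using l1 l2 fields by simp
qed

lemma pv_cb: "lf sa \<phi> \<Longrightarrow> pv \<phi> \<psi> (cb br (i1, a1, j1, w1) (i2, a2, j2, w2)) =
   gsign (j1 * i2) (\<phi> (a1 * a2)) * \<psi> (br w1 w2)"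
  by (simp add: lf_gsign)

lemma pv_cb_R:
  assumes "lf sa \<phi>" "a2 \<in> GA i2"
  shows "pv \<phi> \<psi> (cb br e1 (i2, a2, j2, w2)) = pv (phR \<phi> e1) (psR \<psi> e1) (i2, a2, j2, w2)"
proof (cases e1)
  case (fields i1 a1 j1 w1)
  then show ?thesis using assms
    by (auto simp: lf_gsign gpar_hom[OF gA] m_gsign2 gsign_def)
qed

lemma pv_cb_L:
  assumes "lf sa \<phi>" "lf s \<psi>" "w1 \<in> G j1"
  shows "pv \<phi> \<psi> (cb br (i1, a1, j1, w1) e2) = pv (phL \<phi> e2) (psL \<psi> e2) (i1, a1, j1, w1)"
proof (cases e2)
  case (fields i2 a2 j2 w2)
  then show ?thesis using assms
    by (auto simp: lf_gsign gpar_hom[OF gV] br_gsign2 gsign_def lf_neg br_neg2)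
qed

lemma tpair_tbr_R:
  assumes "T t2" "lf sa \<phi>"
  shows "tpair \<phi> \<psi> (tbr br t1 t2) = (\<Sum>e1\<leftarrow>t1. tpair (phR \<phi> e1) (psR \<psi> e1) t2)"
proof -
  have "\<And>e1. (\<Sum>e2\<leftarrow>t2. pv \<phi> \<psi> (cb br e1 e2)) = tpair (phR \<phi> e1) (psR \<psi> e1) t2"
    unfolding tpair_pv
    apply (rule arg_cong[where f=sum_list], rule map_cong, rule refl)
    using assms by (auto simp: T_def2 intro!: pv_cb_R)
  then show ?thesis by (simp add: tpair_tbr)
qed

lemma tpair_tbr_L:
  assumes "T t1" "lf sa \<phi>" "lf s \<psi>"
  shows "tpair \<phi> \<psi> (tbr br t1 t2) = (\<Sum>e2\<leftarrow>t2. tpair (phL \<phi> e2) (psL \<psi> e2) t1)"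
proof -
  have "\<And>e2. (\<Sum>e1\<leftarrow>t1. pv \<phi> \<psi> (cb br e1 e2)) = tpair (phL \<phi> e2) (psL \<psi> e2) t1"
    unfolding tpair_pv
    apply (rule arg_cong[where f=sum_list], rule map_cong, rule refl)
    using assms by (auto simp: T_def2 intro!: pv_cb_L)
  then show ?thesis unfolding tpair_tbr by (subst sum_list_swap) simp
qed

lemma tpair_tdiff2:
  assumes "T t"
  shows "tpair \<phi> \<psi> (tdiff dA d t) = tpair (\<lambda>a. \<phi> (dA a)) \<psi> t + tpair (\<lambda>a. \<phi> (gpar GA a)) (\<lambda>w. \<psi> (d w)) t"
proof -
  have "\<And>e. e \<in> set t \<Longrightarrow> pv \<phi> \<psi> (dd1 dA e) + pv \<phi> \<psi> (dd2 d e) =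
     pv (\<lambda>a. \<phi> (dA a)) \<psi> e + pv (\<lambda>a. \<phi> (gpar GA a)) (\<lambda>w. \<psi> (d w)) e"
    using assms by (auto simp: T_def2 gpar_hom[OF gA])
  then have "(\<Sum>e\<leftarrow>t. pv \<phi> \<psi> (dd1 dA e) + pv \<phi> \<psi> (dd2 d e)) =
     (\<Sum>e\<leftarrow>t. pv (\<lambda>a. \<phi> (dA a)) \<psi> e + pv (\<lambda>a. \<phi> (gpar GA a)) (\<lambda>w. \<psi> (d w)) e)"
    by (intro arg_cong[where f=sum_list] map_cong) auto
  then show ?thesis unfolding tpair_tdiff by (simp add: tpair_pv sum_list_addf)
qed

lemma teq_tbr_L: "T t1 \<Longrightarrow> T t1' \<Longrightarrow> t1 \<approx> t1' \<Longrightarrow> tbr br t1 t2 \<approx> tbr br t1' t2"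
  by (rule teqI) (simp add: tpair_tbr_L teqD lf_phL lf_psL)
lemma teq_tbr_R: "T t2 \<Longrightarrow> T t2' \<Longrightarrow> t2 \<approx> t2' \<Longrightarrow> tbr br t1 t2 \<approx> tbr br t1 t2'"
  by (rule teqI) (simp add: tpair_tbr_R teqD lf_phR lf_psR)
lemma teq_tbr: "T t1 \<Longrightarrow> T t1' \<Longrightarrow> T t2 \<Longrightarrow> T t2' \<Longrightarrow> t1 \<approx> t1' \<Longrightarrow> t2 \<approx> t2' \<Longrightarrow>
   tbr br t1 t2 \<approx> tbr br t1' t2'"
  by (meson teq_tbr_L teq_tbr_R teq_trans)

lemma lf_dA: "lf sa \<phi> \<Longrightarrow> lf sa (\<lambda>a. \<phi> (dA a))" by (rule lf_comp[OF dA_lin])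
lemma lf_parA: "lf sa \<phi> \<Longrightarrow> lf sa (\<lambda>a. \<phi> (gpar GA a))" by (rule lf_comp[OF gpar_linear[OF gA]])
lemma lf_d: "lf s \<psi> \<Longrightarrow> lf s (\<lambda>a. \<psi> (d a))" by (rule lf_comp[OF d_lin])

lemma teq_tdiff: "T t \<Longrightarrow> T t' \<Longrightarrow> t \<approx> t' \<Longrightarrow> tdiff dA d t \<approx> tdiff dA d t'"
  by (rule teqI) (simp add: tpair_tdiff2 teqD lf_dA lf_parA lf_d)

lemma teq_append: "t1 \<approx> t1' \<Longrightarrow> t2 \<approx> t2' \<Longrightarrow> t1 @ t2 \<approx> t1' @ t2'"
  by (rule teqI) (simp add: teqD)
lemma teq_tneg: "t \<approx> t' \<Longrightarrow> tneg t \<approx> tneg t'"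
  by (rule teqI) (simp add: teqD tpair_tneg)
lemma teq_tscale: "t \<approx> t' \<Longrightarrow> tscale sa c t \<approx> tscale sa c t'"
  by (rule teqI) (simp add: teqD tpair_tscale)

end




lemma sum_tbr: "(\<Sum>g\<leftarrow>tbr br u v. h g) = (\<Sum>e\<leftarrow>u. \<Sum>f\<leftarrow>v. (h (cb br e f) :: 'b::comm_monoid_add))"
  unfolding tbr_cb by (induct u) (auto simp: o_def)

lemma sum_tdiff: "(\<Sum>g\<leftarrow>tdiff dA d u. h g) = (\<Sum>e\<leftarrow>u. (h (dd1 dA e) + h (dd2 d e) :: 'b::comm_monoid_add))"
  unfolding tdiff_dd by (induct u) (auto simp: algebra_simps)

definition sg :: "int \<Rightarrow> rat" where "sg k = (if even k then 1 else -1)"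

lemma gsign_sg: "gsign k (r::rat) = sg k * r" by (simp add: gsign_def sg_def)

lemma sum_list_cong: "(\<And>x. x \<in> set xs \<Longrightarrow> f x = g x) \<Longrightarrow> (\<Sum>x\<leftarrow>xs. f x) = (\<Sum>x\<leftarrow>xs. g x)"
  by (metis map_cong)

context tal
begin

lemma T_mem: "T t \<Longrightarrow> (i,a,j,w) \<in> set t \<Longrightarrow> 0 < i \<and> a \<in> GA i \<and> w \<in> G j"
  unfolding T3 by blast
lemma D_mem: "tdeg n t \<Longrightarrow> (i,a,j,w) \<in> set t \<Longrightarrow> i + j = n"
  unfolding D3 by blast

lemma jac_term:
  assumes l: "lf sa \<phi>" "lf s \<psi>"
    and x: "i1 + j1 = 0" "a1 \<in> GA i1" "w1 \<in> G j1"
    and e: "a2 \<in> GA i2" "w2 \<in> G j2"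
  shows "pv \<phi> \<psi> (cb br (i1,a1,j1,w1) (cb br (i2,a2,j2,w2) (i3,a3,j3,w3))) =
    pv \<phi> \<psi> (cb br (cb br (i1,a1,j1,w1) (i2,a2,j2,w2)) (i3,a3,j3,w3)) +
    pv \<phi> \<psi> (cb br (i2,a2,j2,w2) (cb br (i1,a1,j1,w1) (i3,a3,j3,w3)))"
proof -
  have c: "a2 * a1 = gsign (i2 * i1) (a1 * a2)" using mcomm[OF e(1) x(2)] .
  have c2: "a2 * (a1 * a3) = gsign (i2 * i1) (a1 * a2 * a3)"
    by (simp add: mult.assoc[symmetric] c m_gsign1)
  have jc: "br w1 (br w2 w3) = br (br w1 w2) w3 + gsign (j1 * j2) (br w2 (br w1 w3))"
    by (rule br_jac[OF x(3) e(2)])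
  have j1: "j1 = - i1" using x(1) by simp
  show ?thesis
    apply (simp add: m_gsign1 m_gsign2 lf_gsign[OF l(1)] lf_gsign[OF l(2)] c2 jc lf_add[OF l(2)]
        gsign_sg mult.assoc)
    apply (simp add: j1 sg_def)
    apply (cases "even i1"; cases "even i2"; cases "even i3"; cases "even j2"; cases "even j3")
    apply (simp_all add: algebra_simps)
    done
qed

lemma L1:
  assumes X: "T X" "tdeg 0 X" and u: "T u" and v: "T v"
  shows "tbr br X (tbr br u v) \<approx> tbr br (tbr br X u) v @ tbr br u (tbr br X v)"
proof (rule teqI)
  fix \<phi> \<psi> assume l: "lf sa \<phi>" "lf s \<psi>"
  have A: "tpair \<phi> \<psi> (tbr br X (tbr br u v)) = (\<Sum>x\<leftarrow>X. \<Sum>e\<leftarrow>u. \<Sum>f\<leftarrow>v. pv \<phi> \<psi> (cb br x (cb br e f)))"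
    by (simp add: tpair_tbr sum_tbr)
  have B: "tpair \<phi> \<psi> (tbr br (tbr br X u) v) = (\<Sum>x\<leftarrow>X. \<Sum>e\<leftarrow>u. \<Sum>f\<leftarrow>v. pv \<phi> \<psi> (cb br (cb br x e) f))"
    by (simp add: tpair_tbr sum_tbr)
  have C: "tpair \<phi> \<psi> (tbr br u (tbr br X v)) = (\<Sum>x\<leftarrow>X. \<Sum>e\<leftarrow>u. \<Sum>f\<leftarrow>v. pv \<phi> \<psi> (cb br e (cb br x f)))"
    by (simp add: tpair_tbr sum_tbr sum_list_swap[of _ u])
  have "(\<Sum>x\<leftarrow>X. \<Sum>e\<leftarrow>u. \<Sum>f\<leftarrow>v. pv \<phi> \<psi> (cb br x (cb br e f))) =
     (\<Sum>x\<leftarrow>X. \<Sum>e\<leftarrow>u. \<Sum>f\<leftarrow>v. pv \<phi> \<psi> (cb br (cb br x e) f) + pv \<phi> \<psi> (cb br e (cb br x f)))"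
  proof (intro sum_list_cong)
    fix x e f assume xe: "x \<in> set X" "e \<in> set u" "f \<in> set v"
    obtain i1 a1 j1 w1 where xx: "x = (i1, a1, j1, w1)" by (cases x)
    obtain i2 a2 j2 w2 where ee: "e = (i2, a2, j2, w2)" by (cases e)
    obtain i3 a3 j3 w3 where ff: "f = (i3, a3, j3, w3)" by (cases f)
    have "i1 + j1 = 0" "a1 \<in> GA i1" "w1 \<in> G j1"
      using T_mem[OF X(1)] D_mem[OF X(2)] xe xx by blast+
    moreover have "a2 \<in> GA i2" "w2 \<in> G j2" using T_mem[OF u] xe ee by blast+
    ultimately show "pv \<phi> \<psi> (cb br x (cb br e f)) = pv \<phi> \<psi> (cb br (cb br x e) f) + pv \<phi> \<psi> (cb br e (cb br x f))"
      unfolding xx ee ff by (rule jac_term[OF l])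
  qed
  then show "tpair \<phi> \<psi> (tbr br X (tbr br u v)) = tpair \<phi> \<psi> (tbr br (tbr br X u) v @ tbr br u (tbr br X v))"
    by (simp add: A B C sum_list_addf)
qed

lemma leib_term:
  assumes l: "lf sa \<phi>" "lf s \<psi>"
    and x: "i1 + j1 = 0" "a1 \<in> GA i1" "w1 \<in> G j1"
    and e: "a2 \<in> GA i2" "w2 \<in> G j2"
  shows "pv \<phi> \<psi> (dd1 dA (cb br (i1,a1,j1,w1) (i2,a2,j2,w2))) + pv \<phi> \<psi> (dd2 d (cb br (i1,a1,j1,w1) (i2,a2,j2,w2))) =
    (pv \<phi> \<psi> (cb br (dd1 dA (i1,a1,j1,w1)) (i2,a2,j2,w2)) + pv \<phi> \<psi> (cb br (dd2 d (i1,a1,j1,w1)) (i2,a2,j2,w2))) +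
    (pv \<phi> \<psi> (cb br (i1,a1,j1,w1) (dd1 dA (i2,a2,j2,w2))) + pv \<phi> \<psi> (cb br (i1,a1,j1,w1) (dd2 d (i2,a2,j2,w2))))"
proof -
  have la: "dA (a1 * a2) = dA a1 * a2 + gsign i1 (a1 * dA a2)" by (rule dA_leib[OF x(2)])
  have lb: "d (br w1 w2) = br (d w1) w2 + gsign j1 (br w1 (d w2))" by (rule d_leib[OF x(3)])
  have j1: "j1 = - i1" using x(1) by simp
  show ?thesis
    apply (simp add: m_gsign1 m_gsign2 lf_gsign[OF l(1)] lf_gsign[OF l(2)] dA_gsign la lb
        lf_add[OF l(1)] lf_add[OF l(2)] gsign_sg br_gsign1 br_gsign2 mult.assoc)
    apply (simp add: j1 sg_def)
    apply (cases "even i1"; cases "even i2")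
    apply (simp_all add: algebra_simps)
    done
qed

lemma dd_term:
  assumes l: "lf sa \<phi>" "lf s \<psi>"
  shows "pv \<phi> \<psi> (dd1 dA (dd1 dA (i,a,j,w))) + pv \<phi> \<psi> (dd2 d (dd1 dA (i,a,j,w))) +
    (pv \<phi> \<psi> (dd1 dA (dd2 d (i,a,j,w))) + pv \<phi> \<psi> (dd2 d (dd2 d (i,a,j,w)))) = 0"
  by (simp add: dA_dd d_dd lf_0[OF l(1)] lf_0[OF l(2)] dA_gsign lf_gsign[OF l(1)] gsign_sg sg_def)

lemma anti_term:
  assumes l: "lf sa \<phi>" "lf s \<psi>"
    and e: "a1 \<in> GA i1" "w1 \<in> G j1"
    and f: "a2 \<in> GA i2" "w2 \<in> G j2"
  shows "pv \<phi> \<psi> (cb br (i1,a1,j1,w1) (i2,a2,j2,w2)) =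
    - sg ((i1 + j1) * (i2 + j2)) * pv \<phi> \<psi> (cb br (i2,a2,j2,w2) (i1,a1,j1,w1))"
proof -
  have c: "a2 * a1 = gsign (i2 * i1) (a1 * a2)" using mcomm[OF f(1) e(1)] .
  have b: "br w2 w1 = - gsign (j2 * j1) (br w1 w2)" by (rule br_anti[OF f(2) e(2)])
  show ?thesis
    apply (simp add: c b lf_gsign[OF l(1)] lf_gsign[OF l(2)] lf_neg[OF l(2)] gsign_sg)
    apply (simp add: sg_def)
    done
qed

lemma L2:
  assumes X: "T X" "tdeg 0 X" and u: "T u"
  shows "tdiff dA d (tbr br X u) \<approx> tbr br (tdiff dA d X) u @ tbr br X (tdiff dA d u)"
proof (rule teqI)
  fix \<phi> \<psi> assume l: "lf sa \<phi>" "lf s \<psi>"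
  have A: "tpair \<phi> \<psi> (tdiff dA d (tbr br X u)) = (\<Sum>x\<leftarrow>X. \<Sum>e\<leftarrow>u.
      pv \<phi> \<psi> (dd1 dA (cb br x e)) + pv \<phi> \<psi> (dd2 d (cb br x e)))"
    by (simp add: tpair_pv sum_tdiff sum_tbr)
  have B: "tpair \<phi> \<psi> (tbr br (tdiff dA d X) u) = (\<Sum>x\<leftarrow>X. \<Sum>e\<leftarrow>u.
      pv \<phi> \<psi> (cb br (dd1 dA x) e) + pv \<phi> \<psi> (cb br (dd2 d x) e))"
    by (simp add: tpair_tbr sum_tdiff sum_list_addf)
  have C: "tpair \<phi> \<psi> (tbr br X (tdiff dA d u)) = (\<Sum>x\<leftarrow>X. \<Sum>e\<leftarrow>u.
      pv \<phi> \<psi> (cb br x (dd1 dA e)) + pv \<phi> \<psi> (cb br x (dd2 d e)))"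
    by (simp add: tpair_tbr sum_tdiff)
  have "(\<Sum>x\<leftarrow>X. \<Sum>e\<leftarrow>u. pv \<phi> \<psi> (dd1 dA (cb br x e)) + pv \<phi> \<psi> (dd2 d (cb br x e))) =
     (\<Sum>x\<leftarrow>X. \<Sum>e\<leftarrow>u. (pv \<phi> \<psi> (cb br (dd1 dA x) e) + pv \<phi> \<psi> (cb br (dd2 d x) e)) +
        (pv \<phi> \<psi> (cb br x (dd1 dA e)) + pv \<phi> \<psi> (cb br x (dd2 d e))))"
  proof (intro sum_list_cong)
    fix x e assume xe: "x \<in> set X" "e \<in> set u"
    obtain i1 a1 j1 w1 where xx: "x = (i1, a1, j1, w1)" by (cases x)
    obtain i2 a2 j2 w2 where ee: "e = (i2, a2, j2, w2)" by (cases e)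
    have "i1 + j1 = 0" "a1 \<in> GA i1" "w1 \<in> G j1"
      using T_mem[OF X(1)] D_mem[OF X(2)] xe xx by blast+
    moreover have "a2 \<in> GA i2" "w2 \<in> G j2" using T_mem[OF u] xe ee by blast+
    ultimately show "pv \<phi> \<psi> (dd1 dA (cb br x e)) + pv \<phi> \<psi> (dd2 d (cb br x e)) =
      (pv \<phi> \<psi> (cb br (dd1 dA x) e) + pv \<phi> \<psi> (cb br (dd2 d x) e)) +
        (pv \<phi> \<psi> (cb br x (dd1 dA e)) + pv \<phi> \<psi> (cb br x (dd2 d e)))"
      unfolding xx ee by (rule leib_term[OF l])
  qed
  then show "tpair \<phi> \<psi> (tdiff dA d (tbr br X u)) = tpair \<phi> \<psi> (tbr br (tdiff dA d X) u @ tbr br X (tdiff dA d u))"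
    by (simp add: A B C sum_list_addf)
qed

lemma DD:
  assumes "T t"
  shows "tdiff dA d (tdiff dA d t) \<approx> []"
proof (rule teqI)
  fix \<phi> \<psi> assume l: "lf sa \<phi>" "lf s \<psi>"
  have "tpair \<phi> \<psi> (tdiff dA d (tdiff dA d t)) = (\<Sum>e\<leftarrow>t.
     pv \<phi> \<psi> (dd1 dA (dd1 dA e)) + pv \<phi> \<psi> (dd2 d (dd1 dA e)) +
    (pv \<phi> \<psi> (dd1 dA (dd2 d e)) + pv \<phi> \<psi> (dd2 d (dd2 d e))))"
    by (simp add: tpair_pv sum_tdiff)
  also have "\<dots> = (\<Sum>e\<leftarrow>t. 0)"
  proof (intro sum_list_cong)
    fix e assume "e \<in> set t"
    obtain i a j w where ee: "e = (i, a, j, w)" by (cases e)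
    show "pv \<phi> \<psi> (dd1 dA (dd1 dA e)) + pv \<phi> \<psi> (dd2 d (dd1 dA e)) +
    (pv \<phi> \<psi> (dd1 dA (dd2 d e)) + pv \<phi> \<psi> (dd2 d (dd2 d e))) = 0"
      unfolding ee by (rule dd_term[OF l])
  qed
  finally show "tpair \<phi> \<psi> (tdiff dA d (tdiff dA d t)) = tpair \<phi> \<psi> []" by simp
qed

lemma ANTI:
  assumes u: "T u" "tdeg m u" and v: "T v" "tdeg n v" and l: "lf sa \<phi>" "lf s \<psi>"
  shows "tpair \<phi> \<psi> (tbr br u v) = - sg (m * n) * tpair \<phi> \<psi> (tbr br v u)"
proof -
  have "tpair \<phi> \<psi> (tbr br u v) = (\<Sum>e\<leftarrow>u. \<Sum>f\<leftarrow>v. pv \<phi> \<psi> (cb br e f))"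
    by (simp add: tpair_tbr)
  also have "\<dots> = (\<Sum>e\<leftarrow>u. \<Sum>f\<leftarrow>v. - sg (m * n) * pv \<phi> \<psi> (cb br f e))"
  proof (intro sum_list_cong)
    fix e f assume ef: "e \<in> set u" "f \<in> set v"
    obtain i1 a1 j1 w1 where ee: "e = (i1, a1, j1, w1)" by (cases e)
    obtain i2 a2 j2 w2 where ff: "f = (i2, a2, j2, w2)" by (cases f)
    have 1: "a1 \<in> GA i1" "w1 \<in> G j1" "i1 + j1 = m" using T_mem[OF u(1)] D_mem[OF u(2)] ef ee by blast+
    have 2: "a2 \<in> GA i2" "w2 \<in> G j2" "i2 + j2 = n" using T_mem[OF v(1)] D_mem[OF v(2)] ef ff by blast+
    show "pv \<phi> \<psi> (cb br e f) = - sg (m * n) * pv \<phi> \<psi> (cb br f e)"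
      using anti_term[OF l 1(1,2) 2(1,2)] 1(3) 2(3) ee ff by simp
  qed
  also have "\<dots> = - sg (m * n) * tpair \<phi> \<psi> (tbr br v u)"
    by (simp add: tpair_tbr sum_list_swap[of _ u] sum_list_mult_left)
  finally show ?thesis .
qed

lemma ANTI0: "T X \<Longrightarrow> tdeg 0 X \<Longrightarrow> T v \<Longrightarrow> tdeg n v \<Longrightarrow> tbr br X v \<approx> tneg (tbr br v X)"
proof (rule teqI)
  fix \<phi> \<psi> assume "T X" "tdeg 0 X" "T v" "tdeg n v" "lf sa \<phi>" "lf s \<psi>"
  then show "tpair \<phi> \<psi> (tbr br X v) = tpair \<phi> \<psi> (tneg (tbr br v X))"
    using ANTI[of X 0 v n \<phi> \<psi>] by (simp add: tpair_tneg sg_def)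
qed

lemma ANTI1: "T u \<Longrightarrow> tdeg 1 u \<Longrightarrow> T v \<Longrightarrow> tdeg 1 v \<Longrightarrow> tbr br u v \<approx> tbr br v u"
proof (rule teqI)
  fix \<phi> \<psi> assume "T u" "tdeg 1 u" "T v" "tdeg 1 v" "lf sa \<phi>" "lf s \<psi>"
  then show "tpair \<phi> \<psi> (tbr br u v) = tpair \<phi> \<psi> (tbr br v u)"
    using ANTI[of u 1 v 1 \<phi> \<psi>] by (simp add: sg_def)
qed

end




lemma pascal_sum:
  "(\<Sum>k\<le>n. of_nat (n choose k) * (f (Suc k) (n - k) + f k (Suc n - k))) =
   (\<Sum>k\<le>Suc n. of_nat (Suc n choose k) * (f k (Suc n - k) :: rat))"
proof -
  have R: "(\<Sum>k\<le>Suc n. of_nat (Suc n choose k) * f k (Suc n - k)) =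
     f 0 (Suc n) + (\<Sum>k\<le>n. of_nat (n choose k) * f (Suc k) (n - k)) +
       (\<Sum>k\<le>n. of_nat (n choose Suc k) * f (Suc k) (n - k))"
    by (subst sum.atMost_Suc_shift) (simp add: algebra_simps sum.distrib)
  have L2: "(\<Sum>k\<le>n. of_nat (n choose k) * f k (Suc n - k)) =
     f 0 (Suc n) + (\<Sum>k<n. of_nat (n choose Suc k) * f (Suc k) (n - k))"
  proof (cases n)
    case 0 then show ?thesis by simp
  next
    case (Suc m)
    then show ?thesis by (simp only: sum.atMost_Suc_shift lessThan_Suc_atMost) simp
  qed
  have L3: "(\<Sum>k\<le>n. of_nat (n choose Suc k) * f (Suc k) (n - k)) =
     (\<Sum>k<n. of_nat (n choose Suc k) * f (Suc k) (n - k))"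
    by (simp add: lessThan_Suc_atMost[symmetric])
  show ?thesis
    unfolding R by (simp only: distrib_left sum.distrib L2 L3 add.assoc add.commute add.left_commute)
qed

fun sce :: "(rat \<Rightarrow> 'a \<Rightarrow> 'a) \<Rightarrow> rat \<Rightarrow> int \<times> 'a \<times> int \<times> 'v \<Rightarrow> int \<times> 'a \<times> int \<times> 'v" where
  "sce sa r (i, a, j, w) = (i, sa r a, j, w)"
fun nge :: "int \<times> 'a::uminus \<times> int \<times> 'v \<Rightarrow> int \<times> 'a \<times> int \<times> 'v" where
  "nge (i, a, j, w) = (i, - a, j, w)"

lemma tscale_sce: "tscale sa r t = map (sce sa r) t"
  unfolding tscale_def by (intro map_cong) auto
lemma tneg_nge: "tneg t = map nge t"
  unfolding tneg_def by (intro map_cong) auto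

lemma tdiff_append[simp]: "tdiff dA d (t1 @ t2) = tdiff dA d t1 @ tdiff dA d t2"
  by (simp add: tdiff_def)
lemma tbr_append_L[simp]: "tbr br (t1 @ t2) v = tbr br t1 v @ tbr br t2 v"
  by (simp add: tbr_def)
lemma tpair_tbr_append_R[simp]: "tpair \<phi> \<psi> (tbr br u (t1 @ t2)) = tpair \<phi> \<psi> (tbr br u t1) + tpair \<phi> \<psi> (tbr br u t2)"
  by (simp add: tpair_tbr sum_list_addf)

context tal
begin

lemma dA_scale: "dA (sa r a) = sa r (dA a)" by (rule lin_scale[OF dA_lin])
lemma gsign_scaleA: "gsign k (sa r a) = sa r (gsign k a)"
  using gsign_scale[OF gA] .

lemma tpair_tbr_scale_R: "lf sa \<phi> \<Longrightarrow> tpair \<phi> \<psi> (tbr br u (tscale sa r t)) = r * tpair \<phi> \<psi> (tbr br u t)"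
  unfolding tpair_tbr tscale_sce
  by (induct u) (auto simp: sum_list_mult_left o_def algebra_simps intro!: sum_list_cong
      split: prod.splits simp: mscale2[symmetric] lf_gsign lf_scale gsign_sg)
lemma tpair_tbr_scale_L: "lf sa \<phi> \<Longrightarrow> tpair \<phi> \<psi> (tbr br (tscale sa r t) u) = r * tpair \<phi> \<psi> (tbr br t u)"
  unfolding tpair_tbr tscale_sce
  by (induct t) (auto simp: sum_list_mult_left o_def algebra_simps intro!: sum_list_cong
      split: prod.splits simp: mscale1[symmetric] lf_gsign lf_scale gsign_sg)
lemma sum_list_neg: "(\<Sum>x\<leftarrow>t. - f x) = - (\<Sum>x\<leftarrow>t. (f x :: rat))"
  by (induct t) auto
lemma pv_cb_nge_R: "lf sa \<phi> \<Longrightarrow> pv \<phi> \<psi> (cb br e1 (nge e2)) = - pv \<phi> \<psi> (cb br e1 e2)"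
  by (cases e1; cases e2) (simp add: lf_gsign lf_neg gsign_sg)
lemma pv_cb_nge_L: "lf sa \<phi> \<Longrightarrow> pv \<phi> \<psi> (cb br (nge e1) e2) = - pv \<phi> \<psi> (cb br e1 e2)"
  by (cases e1; cases e2) (simp add: lf_gsign lf_neg gsign_sg)
lemma tpair_tbr_neg_R: "lf sa \<phi> \<Longrightarrow> tpair \<phi> \<psi> (tbr br u (tneg t)) = - tpair \<phi> \<psi> (tbr br u t)"
  unfolding tpair_tbr tneg_nge
  by (simp add: o_def pv_cb_nge_R sum_list_neg)
lemma tpair_tbr_neg_L: "lf sa \<phi> \<Longrightarrow> tpair \<phi> \<psi> (tbr br (tneg t) u) = - tpair \<phi> \<psi> (tbr br t u)"
  unfolding tpair_tbr tneg_nge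
  by (simp add: o_def pv_cb_nge_L sum_list_neg)
lemma tpair_tdiff_scale: "lf sa \<phi> \<Longrightarrow> tpair \<phi> \<psi> (tdiff dA d (tscale sa r t)) = r * tpair \<phi> \<psi> (tdiff dA d t)"
  unfolding tpair_tdiff tscale_sce
  by (induct t) (auto simp: dA_scale gsign_scaleA lf_scale algebra_simps)
lemma tpair_tdiff_neg: "lf sa \<phi> \<Longrightarrow> tpair \<phi> \<psi> (tdiff dA d (tneg t)) = - tpair \<phi> \<psi> (tdiff dA d t)"
  unfolding tpair_tdiff tneg_nge
  by (induct t) (auto simp: lin_neg[OF dA_lin] gsign_neg lf_neg algebra_simps)

end




context tal
begin

fun EAD :: "('a, 'v) tens \<Rightarrow> rat \<times> ('a, 'v) tens \<Rightarrow> rat \<times> ('a, 'v) tens" where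
  "EAD X (r, t) = (0, tneg (tscale sa r (tdiff dA d X)) @ tbr br X t)"
fun EB :: "rat \<times> ('a, 'v) tens \<Rightarrow> rat \<times> ('a, 'v) tens \<Rightarrow> ('a, 'v) tens" where
  "EB (r1, t1) (r2, t2) = tscale sa r1 (tdiff dA d t2) @ tscale sa r2 (tdiff dA d t1) @ tbr br t1 t2"

definition good :: "rat \<times> ('a, 'v) tens \<Rightarrow> bool" where
  "good p \<longleftrightarrow> T (snd p) \<and> tdeg 1 (snd p)"

lemma good_EAD: "T X \<Longrightarrow> tdeg 0 X \<Longrightarrow> good p \<Longrightarrow> good (EAD X p)"
proof -
  assume X: "T X" "tdeg 0 X" and p: "good p"
  obtain r t where pp: "p = (r, t)" by (cases p)
  have t: "T t" "tdeg 1 t" using p pp by (auto simp: good_def)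
  have "tdeg (0 + 1) (tdiff dA d X)" by (rule D_tdiff[OF X(2)])
  then have 1: "tdeg 1 (tdiff dA d X)" by simp
  have "tdeg (0 + 1) (tbr br X t)" by (rule D_tbr[OF X(2) t(2)])
  then have 2: "tdeg 1 (tbr br X t)" by simp
  show ?thesis using X t 1 2 pp
    by (auto simp: good_def T_tneg T_tscale T_tdiff T_tbr D_tneg D_tscale)
qed

lemma good_EA: "T X \<Longrightarrow> tdeg 0 X \<Longrightarrow> good p \<Longrightarrow> good ((EAD X ^^ k) p)"
  by (induct k) (auto simp: good_EAD)

lemma T_EB: "good p \<Longrightarrow> good q \<Longrightarrow> T (EB p q)"
  by (cases p; cases q) (auto simp: good_def T_tscale T_tdiff T_tbr)

lemma tpair_EB: "lf sa \<phi> \<Longrightarrow> tpair \<phi> \<psi> (EB (r1, t1) (r2, t2)) =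
    r1 * tpair \<phi> \<psi> (tdiff dA d t2) + r2 * tpair \<phi> \<psi> (tdiff dA d t1) + tpair \<phi> \<psi> (tbr br t1 t2)"
  by (simp add: tpair_tscale)

lemma L1ext:
  assumes X: "T X" "tdeg 0 X" and p: "good p" and q: "good q"
  shows "tbr br X (EB p q) \<approx> EB (EAD X p) q @ EB p (EAD X q)"
proof (rule teqI)
  fix \<phi> \<psi> assume l: "lf sa \<phi>" "lf s \<psi>"
  obtain r1 t1 where pp: "p = (r1, t1)" by (cases p)
  obtain r2 t2 where qq: "q = (r2, t2)" by (cases q)
  have t1: "T t1" "tdeg 1 t1" using p pp by (auto simp: good_def)
  have t2: "T t2" "tdeg 1 t2" using q qq by (auto simp: good_def)
  define Y where "Y = tdiff dA d X"
  have "tdeg (0 + 1) Y" unfolding Y_def by (rule D_tdiff[OF X(2)])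
  then have Y: "T Y" "tdeg 1 Y" using X by (auto simp: Y_def T_tdiff)
  let ?P = "\<lambda>u v. tpair \<phi> \<psi> (tbr br u v)"
  let ?D = "\<lambda>u. tpair \<phi> \<psi> (tdiff dA d u)"
  have e1: "tpair \<phi> \<psi> (tbr br X (EB p q)) = r1 * ?P X (tdiff dA d t2) + r2 * ?P X (tdiff dA d t1) + ?P X (tbr br t1 t2)"
    by (simp add: pp qq tpair_tbr_scale_R l)
  have e2: "tpair \<phi> \<psi> (EB (EAD X p) q) = r2 * (- r1 * ?D Y + ?D (tbr br X t1)) + (- r1 * ?P Y t2 + ?P (tbr br X t1) t2)"
    by (simp add: pp qq l tpair_tscale tpair_tdiff_scale tpair_tdiff_neg tpair_tbr_neg_L tpair_tbr_scale_L Y_def)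
  have e3: "tpair \<phi> \<psi> (EB p (EAD X q)) = r1 * (- r2 * ?D Y + ?D (tbr br X t2)) + (- r2 * ?P t1 Y + ?P t1 (tbr br X t2))"
    by (simp add: pp qq l tpair_tscale tpair_tdiff_scale tpair_tdiff_neg tpair_tbr_neg_R tpair_tbr_scale_R Y_def)
  have f1: "?D Y = 0" using teqD[OF DD[OF X(1)] l] by (simp add: Y_def)
  have f2: "?D (tbr br X t) = ?P Y t + ?P X (tdiff dA d t)" if "T t" for t
    using teqD[OF L2[OF X that] l] by (simp add: Y_def)
  have f3: "?P t1 Y = ?P Y t1" using teqD[OF ANTI1[OF t1 Y] l] .
  have f4: "?P X (tbr br t1 t2) = ?P (tbr br X t1) t2 + ?P t1 (tbr br X t2)"
    using teqD[OF L1[OF X t1(1) t2(1)] l] by simp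
  show "tpair \<phi> \<psi> (tbr br X (EB p q)) = tpair \<phi> \<psi> (EB (EAD X p) q @ EB p (EAD X q))"
    unfolding tpair_append e1 e2 e3 f1 f2[OF t1(1)] f2[OF t2(1)] f3 f4
    by (simp add: algebra_simps)
qed

lemma sum_list_sum_swap: "(\<Sum>x\<leftarrow>xs. \<Sum>k\<in>K. f x k) = (\<Sum>k\<in>K. \<Sum>x\<leftarrow>xs. (f x k :: rat))"
  by (induct xs) (auto simp: sum.distrib)

lemma D1ext:
  assumes X: "T X" "tdeg 0 X" and p: "good p" and q: "good q"
  shows "\<forall>\<phi> \<psi>. lf sa \<phi> \<longrightarrow> lf s \<psi> \<longrightarrow> tpair \<phi> \<psi> ((tbr br X ^^ n) (EB p q)) =
     (\<Sum>k\<le>n. of_nat (n choose k) * tpair \<phi> \<psi> (EB ((EAD X ^^ k) p) ((EAD X ^^ (n - k)) q)))"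
proof (induct n)
  case 0
  then show ?case by simp
next
  case (Suc n)
  show ?case
  proof (intro allI impI)
    fix \<phi> \<psi> assume l: "lf sa \<phi>" "lf s \<psi>"
    let ?EA = "\<lambda>k p. (EAD X ^^ k) p"
    let ?W = "(tbr br X ^^ n) (EB p q)"
    have TW: "T ?W"
    proof -
      have "T ((tbr br X ^^ m) (EB p q))" for m
        by (induct m) (auto simp: T_EB p q T_tbr X)
      then show ?thesis .
    qed
    have TE: "T (EB (?EA k p) (?EA m q))" for k m
      by (rule T_EB) (auto intro: good_EA X p q)
    have "tpair \<phi> \<psi> ((tbr br X ^^ Suc n) (EB p q)) = tpair \<phi> \<psi> (tbr br X ?W)" by simp
    also have "\<dots> = (\<Sum>x\<leftarrow>X. tpair (phR \<phi> x) (psR \<psi> x) ?W)"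
      by (rule tpair_tbr_R[OF TW l(1)])
    also have "\<dots> = (\<Sum>x\<leftarrow>X. \<Sum>k\<le>n. of_nat (n choose k) *
        tpair (phR \<phi> x) (psR \<psi> x) (EB (?EA k p) (?EA (n - k) q)))"
      using Suc lf_phR[OF l(1)] lf_psR[OF l(2)] by simp
    also have "\<dots> = (\<Sum>k\<le>n. of_nat (n choose k) *
        (\<Sum>x\<leftarrow>X. tpair (phR \<phi> x) (psR \<psi> x) (EB (?EA k p) (?EA (n - k) q))))"
      by (simp add: sum_list_sum_swap sum_list_mult_left)
    also have "\<dots> = (\<Sum>k\<le>n. of_nat (n choose k) *
        tpair \<phi> \<psi> (tbr br X (EB (?EA k p) (?EA (n - k) q))))"
      by (simp add: tpair_tbr_R[OF TE l(1)])
    also have "\<dots> = (\<Sum>k\<le>n. of_nat (n choose k) *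
        (tpair \<phi> \<psi> (EB (?EA (Suc k) p) (?EA (n - k) q)) + tpair \<phi> \<psi> (EB (?EA k p) (?EA (Suc n - k) q))))"
    proof (intro sum.cong refl)
      fix k assume k: "k \<in> {..n}"
      have "tbr br X (EB (?EA k p) (?EA (n - k) q)) \<approx>
          EB (EAD X (?EA k p)) (?EA (n - k) q) @ EB (?EA k p) (EAD X (?EA (n - k) q))"
        by (rule L1ext[OF X]) (auto intro: good_EA X p q)
      moreover have "Suc n - k = Suc (n - k)" using k by auto
      ultimately show "of_nat (n choose k) * tpair \<phi> \<psi> (tbr br X (EB (?EA k p) (?EA (n - k) q))) =
         of_nat (n choose k) * (tpair \<phi> \<psi> (EB (?EA (Suc k) p) (?EA (n - k) q)) + tpair \<phi> \<psi> (EB (?EA k p) (?EA (Suc n - k) q)))"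
        using teqD[OF _ l] by simp
    qed
    also have "\<dots> = (\<Sum>k\<le>Suc n. of_nat (Suc n choose k) * tpair \<phi> \<psi> (EB (?EA k p) (?EA (Suc n - k) q)))"
      by (rule pascal_sum[where f="\<lambda>k m. tpair \<phi> \<psi> (EB (?EA k p) (?EA m q))"])
    finally show "tpair \<phi> \<psi> ((tbr br X ^^ Suc n) (EB p q)) =
       (\<Sum>k\<le>Suc n. of_nat (Suc n choose k) * tpair \<phi> \<psi> (EB (?EA k p) (?EA (Suc n - k) q)))" .
  qed
qed

end




lemma set_tbr: "e \<in> set (tbr br u v) \<Longrightarrow> \<exists>x\<in>set u. \<exists>f\<in>set v. e = cb br x f"
  unfolding tbr_cb by auto

lemma tpair_w0: "(\<And>i a j w. (i,a,j,w) \<in> set t \<Longrightarrow> w = 0) \<Longrightarrow> lf sv \<psi> \<Longrightarrow> tpair \<phi> \<psi> t = 0"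
proof (induct t)
  case Nil then show ?case by simp
next
  case (Cons e t)
  obtain i a j w where ee: "e = (i,a,j,w)" by (cases e)
  have w: "w = 0" using Cons(2) ee by auto
  have h: "\<And>i a j w. (i,a,j,w) \<in> set t \<Longrightarrow> w = 0" using Cons(2) by auto
  have "tpair \<phi> \<psi> t = 0" using Cons(1)[OF h Cons(3)] .
  then show ?case using ee w by (simp add: tpair_Cons lf_0[OF Cons(3)])
qed

lemma tbr_Nil1[simp]: "tbr br [] v = []" by (simp add: tbr_def)
lemma tbr_Nil2[simp]: "tbr br u [] = []" by (simp add: tbr_cb)
lemma tdiff_Nil[simp]: "tdiff dA d [] = []" by (simp add: tdiff_def)

context tal
begin

lemma module_s: "module s" using vsV module_iff_vector_space by blast

lemma lcs_ent: "(i,a,j,w) \<in> set ((tbr br X ^^ k) t) \<Longrightarrow> w \<in> lcs s br k"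
proof (induct k arbitrary: i a j w)
  case 0 then show ?case by simp
next
  case (Suc k)
  from Suc(2) have "(i,a,j,w) \<in> set (tbr br X ((tbr br X ^^ k) t))" by simp
  then obtain x f where xf: "x \<in> set X" "f \<in> set ((tbr br X ^^ k) t)" "(i,a,j,w) = cb br x f"
    using set_tbr by blast
  obtain i1 a1 j1 w1 where xx: "x = (i1,a1,j1,w1)" by (cases x)
  obtain i2 a2 j2 w2 where ff: "f = (i2,a2,j2,w2)" by (cases f)
  have w: "w = br w1 w2" using xf(3) xx ff by simp
  have "w2 \<in> lcs s br k" using Suc(1) xf(2) ff by blast
  then have "w \<in> {br x y | x y. y \<in> lcs s br k}" using w by blast
  then show ?case by (simp add: module.span_base[OF module_s])
qed

lemma nil_iter:
  assumes N: "lcs s br N0 = {0}" and k: "N0 \<le> k" and l: "lf s \<psi>"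
  shows "tpair \<phi> \<psi> ((tbr br X ^^ k) t) = 0"
proof -
  have "(tbr br X ^^ k) t = (tbr br X ^^ N0) ((tbr br X ^^ (k - N0)) t)"
    using k by (metis funpow_add le_add_diff_inverse o_apply)
  then show ?thesis
    using lcs_ent[where X=X and k=N0 and t="(tbr br X ^^ (k - N0)) t"] N
    by (intro tpair_w0[OF _ l]) auto
qed

lemma T_iter: "T X \<Longrightarrow> T t \<Longrightarrow> T ((tbr br X ^^ n) t)"
  by (induct n) (auto simp: T_tbr)

lemma iter_scale:
  assumes X: "T X" and t: "T t" "T t'"
    and h: "\<forall>\<phi> \<psi>. lf sa \<phi> \<longrightarrow> lf s \<psi> \<longrightarrow> tpair \<phi> \<psi> t = c * tpair \<phi> \<psi> t'"
  shows "\<forall>\<phi> \<psi>. lf sa \<phi> \<longrightarrow> lf s \<psi> \<longrightarrow> tpair \<phi> \<psi> ((tbr br X ^^ n) t) = c * tpair \<phi> \<psi> ((tbr br X ^^ n) t')"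
proof (induct n)
  case 0 then show ?case using h by simp
next
  case (Suc n)
  show ?case
  proof (intro allI impI)
    fix \<phi> \<psi> assume l: "lf sa \<phi>" "lf s \<psi>"
    have "tpair \<phi> \<psi> ((tbr br X ^^ Suc n) t) = (\<Sum>x\<leftarrow>X. tpair (phR \<phi> x) (psR \<psi> x) ((tbr br X ^^ n) t))"
      using tpair_tbr_R[OF T_iter[OF X t(1)] l(1)] by simp
    also have "\<dots> = (\<Sum>x\<leftarrow>X. c * tpair (phR \<phi> x) (psR \<psi> x) ((tbr br X ^^ n) t'))"
      using Suc lf_phR[OF l(1)] lf_psR[OF l(2)] by simp
    also have "\<dots> = c * tpair \<phi> \<psi> ((tbr br X ^^ Suc n) t')"
      using tpair_tbr_R[OF T_iter[OF X t(2)] l(1)] by (simp add: sum_list_mult_left)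
    finally show "tpair \<phi> \<psi> ((tbr br X ^^ Suc n) t) = c * tpair \<phi> \<psi> ((tbr br X ^^ Suc n) t')" .
  qed
qed

lemma EA_fst: "fst ((EAD X ^^ Suc m) p) = 0"
proof -
  have "fst (EAD X q) = 0" for q by (cases q) simp
  then show ?thesis by simp
qed

lemma EA_snd:
  assumes X: "T X" "tdeg 0 X" and p: "good p"
  shows "\<forall>\<phi> \<psi>. lf sa \<phi> \<longrightarrow> lf s \<psi> \<longrightarrow>
     tpair \<phi> \<psi> (snd ((EAD X ^^ Suc m) p)) = tpair \<phi> \<psi> ((tbr br X ^^ m) (snd (EAD X p)))"
proof (induct m)
  case 0 then show ?case by simp
next
  case (Suc m)
  show ?case
  proof (intro allI impI)
    fix \<phi> \<psi> assume l: "lf sa \<phi>" "lf s \<psi>"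
    let ?q = "(EAD X ^^ Suc m) p"
    have q: "?q = (0, snd ?q)" using EA_fst[where X=X and m=m and p=p] by (metis prod.collapse)
    have Tq: "T (snd ?q)" using good_EA[OF X p] by (simp only: good_def)
    have T1: "T (snd (EAD X p))" using good_EAD[OF X p] by (simp add: good_def)
    have "tpair \<phi> \<psi> (snd ((EAD X ^^ Suc (Suc m)) p)) = tpair \<phi> \<psi> (snd (EAD X (0, snd ?q)))"
      using q by (metis funpow.simps(2) o_apply)
    also have "\<dots> = tpair \<phi> \<psi> (tbr br X (snd ?q))"
      by (simp add: tpair_tneg[OF l(1)] tpair_tscale[OF l(1)])
    also have "\<dots> = (\<Sum>x\<leftarrow>X. tpair (phR \<phi> x) (psR \<psi> x) (snd ?q))"
      by (rule tpair_tbr_R[OF Tq l(1)])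
    also have "\<dots> = (\<Sum>x\<leftarrow>X. tpair (phR \<phi> x) (psR \<psi> x) ((tbr br X ^^ m) (snd (EAD X p))))"
      using Suc lf_phR[OF l(1)] lf_psR[OF l(2)] by simp
    also have "\<dots> = tpair \<phi> \<psi> ((tbr br X ^^ Suc m) (snd (EAD X p)))"
      using tpair_tbr_R[OF T_iter[OF X(1) T1] l(1)] by simp
    finally show "tpair \<phi> \<psi> (snd ((EAD X ^^ Suc (Suc m)) p)) = tpair \<phi> \<psi> ((tbr br X ^^ Suc m) (snd (EAD X p)))" .
  qed
qed

lemma EA_nil:
  assumes N: "lcs s br N0 = {0}" and X: "T X" "tdeg 0 X" and p: "good p" and k: "Suc N0 \<le> k"
    and l: "lf sa \<phi>" "lf s \<psi>"
  shows "tpair \<phi> \<psi> (snd ((EAD X ^^ k) p)) = 0" "fst ((EAD X ^^ k) p) = 0"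
proof -
  obtain m where m: "k = Suc m" "N0 \<le> m" using k by (cases k) auto
  show "tpair \<phi> \<psi> (snd ((EAD X ^^ k) p)) = 0"
    using EA_snd[OF X p] nil_iter[OF N m(2) l(2)] l m(1) by simp
  show "fst ((EAD X ^^ k) p) = 0" using EA_fst[where X=X and m=m and p=p] m(1) by simp
qed

lemma tpair_zero_teq: "T t \<Longrightarrow> (\<And>\<phi> \<psi>. lf sa \<phi> \<Longrightarrow> lf s \<psi> \<Longrightarrow> tpair \<phi> \<psi> t = 0) \<Longrightarrow> t \<approx> []"
  by (rule teqI) simp

lemma EB_vanish:
  assumes N: "lcs s br N0 = {0}" and X: "T X" "tdeg 0 X" and p: "good p" and q: "good q" and k: "Suc N0 \<le> k"
    and l: "lf sa \<phi>" "lf s \<psi>"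
  shows "tpair \<phi> \<psi> (EB ((EAD X ^^ k) p) q) = 0" "tpair \<phi> \<psi> (EB q ((EAD X ^^ k) p)) = 0"
proof -
  let ?e = "(EAD X ^^ k) p"
  have ge: "good ?e" by (rule good_EA[OF X p])
  have z: "snd ?e \<approx> []"
    by (rule tpair_zero_teq) (use ge EA_nil[OF N X p k] in \<open>auto simp: good_def\<close>)
  have f: "fst ?e = 0" using EA_nil[OF N X p k l] by simp
  have Tq: "T (snd q)" using q by (simp add: good_def)
  have Te: "T (snd ?e)" using ge by (simp add: good_def)
  have d0: "tpair \<phi> \<psi> (tdiff dA d (snd ?e)) = 0"
    using teqD[OF teq_tdiff[OF Te T_Nil z] l] by simp
  have b1: "tpair \<phi> \<psi> (tbr br (snd ?e) (snd q)) = 0"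
    using teqD[OF teq_tbr_L[OF Te T_Nil z] l] by simp
  have b2: "tpair \<phi> \<psi> (tbr br (snd q) (snd ?e)) = 0"
    using teqD[OF teq_tbr_R[OF Te T_Nil z] l] by simp
  have ee: "?e = (0, snd ?e)" using f by (metis prod.collapse)
  obtain r t where qq: "q = (r, t)" by (cases q)
  show "tpair \<phi> \<psi> (EB ?e q) = 0"
    using d0 b1 by (subst ee) (simp only: qq tpair_EB[OF l(1)], simp)
  show "tpair \<phi> \<psi> (EB q ?e) = 0"
    using d0 b2 by (subst ee) (simp only: qq tpair_EB[OF l(1)], simp)
qed

end




lemma sum_list_upt_sum: "(\<Sum>k\<leftarrow>[0..<N]. f k) = (\<Sum>k<N. (f k :: 'b::comm_monoid_add))"
  by (induct N) (auto simp: add.commute)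

lemma tpair_concat_upt: "tpair \<phi> \<psi> (concat (map f [0..<N])) = (\<Sum>k<N. tpair \<phi> \<psi> (f k))"
  by (simp add: tpair_concat o_def sum_list_upt_sum)

lemma tdiff_concat: "tdiff dA d (concat ts) = concat (map (tdiff dA d) ts)"
  by (induct ts) auto

lemma tbr_concat_L: "tbr br (concat ts) v = concat (map (\<lambda>t. tbr br t v) ts)"
  by (induct ts) auto

lemma tpair_tbr_concat_R: "tpair \<phi> \<psi> (tbr br u (concat ts)) = (\<Sum>t\<leftarrow>ts. tpair \<phi> \<psi> (tbr br u t))"
  by (induct ts) auto

context tal
begin

definition cS :: "('a, 'v) tens \<Rightarrow> rat \<times> ('a, 'v) tens \<Rightarrow> nat \<Rightarrow> rat \<times> ('a, 'v) tens" where
  "cS X p N = ((\<Sum>k<N. fst ((EAD X ^^ k) p) / fact k),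
     concat (map (\<lambda>k. tscale sa (1 / fact k) (snd ((EAD X ^^ k) p))) [0..<N]))"

lemma cauchy:
  assumes N: "lcs s br N0 = {0}" and X: "T X" "tdeg 0 X" and p: "good p"
    and l: "lf sa \<phi>" "lf s \<psi>"
  shows "(\<Sum>n<2 * Suc N0. (1 / fact n) * tpair \<phi> \<psi> ((tbr br X ^^ n) (EB p p))) =
     tpair \<phi> \<psi> (EB (cS X p (Suc N0)) (cS X p (Suc N0)))"
proof -
  define M where "M = Suc N0"
  define c :: "nat \<Rightarrow> rat" where "c k = 1 / fact k" for k
  define E where "E k = (EAD X ^^ k) p" for k
  define TT where "TT k m = tpair \<phi> \<psi> (EB (E k) (E m))" for k m
  define r where "r k = fst (E k)" for k
  define t where "t k = snd (E k)" for k
  have Et: "E k = (r k, t k)" for k by (simp add: r_def t_def)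
  have TTe: "TT k m = r k * tpair \<phi> \<psi> (tdiff dA d (t m)) + r m * tpair \<phi> \<psi> (tdiff dA d (t k)) +
      tpair \<phi> \<psi> (tbr br (t k) (t m))" for k m
    unfolding TT_def Et by (rule tpair_EB[OF l(1)])
  have van: "TT k m = 0" if "M \<le> k \<or> M \<le> m" for k m
    using that EB_vanish[OF N X p good_EA[OF X p] _ l] unfolding TT_def E_def M_def by auto
  have "(\<Sum>n<2 * M. (1 / fact n) * tpair \<phi> \<psi> ((tbr br X ^^ n) (EB p p))) =
      (\<Sum>n<2 * M. \<Sum>k\<le>n. c k * c (n - k) * TT k (n - k))"
  proof (intro sum.cong refl)
    fix n assume "n \<in> {..<2 * M}"
    have "(1 / fact n) * tpair \<phi> \<psi> ((tbr br X ^^ n) (EB p p)) =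
        (\<Sum>k\<le>n. (1 / fact n) * (of_nat (n choose k) * TT k (n - k)))"
      using D1ext[OF X p p] l by (simp add: sum_distrib_left TT_def E_def)
    also have "\<dots> = (\<Sum>k\<le>n. c k * c (n - k) * TT k (n - k))"
      by (intro sum.cong refl) (simp add: binomial_fact c_def)
    finally show "(1 / fact n) * tpair \<phi> \<psi> ((tbr br X ^^ n) (EB p p)) = (\<Sum>k\<le>n. c k * c (n - k) * TT k (n - k))" .
  qed
  also have "\<dots> = (\<Sum>(k, m)\<in>{(k, m). k + m < 2 * M}. c k * c m * TT k m)"
    by (rule sum.triangle_reindex[symmetric])
  also have "\<dots> = (\<Sum>(k, m)\<in>{..<M} \<times> {..<M}. c k * c m * TT k m)"
  proof (rule sum.mono_neutral_right)
    show "finite {(k, m). k + m < 2 * M}"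
      by (rule finite_subset[of _ "{..<2*M} \<times> {..<2*M}"]) auto
    show "{..<M} \<times> {..<M} \<subseteq> {(k, m). k + m < 2 * M}" by auto
    show "\<forall>i\<in>{(k, m). k + m < 2 * M} - {..<M} \<times> {..<M}. (case i of (k, m) \<Rightarrow> c k * c m * TT k m) = 0"
    proof
      fix i assume i: "i \<in> {(k, m). k + m < 2 * M} - {..<M} \<times> {..<M}"
      obtain k m where km: "i = (k, m)" by (cases i)
      have "M \<le> k \<or> M \<le> m" using i km by auto
      then show "(case i of (k, m) \<Rightarrow> c k * c m * TT k m) = 0" using van km by simp
    qed
  qed
  also have "\<dots> = (\<Sum>k<M. \<Sum>m<M. c k * c m * TT k m)"
    by (simp add: sum.cartesian_product)
  also have "\<dots> = tpair \<phi> \<psi> (EB (cS X p M) (cS X p M))"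
  proof -
    have cSe: "cS X p M = ((\<Sum>k<M. c k * r k), concat (map (\<lambda>k. tscale sa (c k) (t k)) [0..<M]))"
      by (simp add: cS_def c_def r_def t_def E_def)
    have D: "tpair \<phi> \<psi> (tdiff dA d (concat (map (\<lambda>k. tscale sa (c k) (t k)) [0..<M]))) =
        (\<Sum>k<M. c k * tpair \<phi> \<psi> (tdiff dA d (t k)))"
      by (simp add: tdiff_concat map_map o_def tpair_concat_upt tpair_tdiff_scale[OF l(1)])
    have B: "tpair \<phi> \<psi> (tbr br (concat (map (\<lambda>k. tscale sa (c k) (t k)) [0..<M]))
          (concat (map (\<lambda>k. tscale sa (c k) (t k)) [0..<M]))) =
        (\<Sum>k<M. \<Sum>m<M. c k * c m * tpair \<phi> \<psi> (tbr br (t k) (t m)))"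
      by (simp add: tbr_concat_L map_map o_def tpair_concat_upt tpair_tbr_concat_R sum_list_upt_sum
          tpair_tbr_scale_L[OF l(1)] tpair_tbr_scale_R[OF l(1)] sum_distrib_left mult.assoc)
    define Dk where "Dk k = tpair \<phi> \<psi> (tdiff dA d (t k))" for k
    define Pk where "Pk k m = tpair \<phi> \<psi> (tbr br (t k) (t m))" for k m
    have s1: "(\<Sum>k<M. \<Sum>m<M. c k * c m * (r k * Dk m + r m * Dk k + Pk k m)) =
       (\<Sum>k<M. \<Sum>m<M. c k * c m * (r k * Dk m)) + (\<Sum>k<M. \<Sum>m<M. c k * c m * (r m * Dk k)) +
       (\<Sum>k<M. \<Sum>m<M. c k * c m * Pk k m)"
      by (simp add: sum.distrib distrib_left)
    have s2: "(\<Sum>k<M. \<Sum>m<M. c k * c m * (r m * Dk k)) = (\<Sum>k<M. \<Sum>m<M. c k * c m * (r k * Dk m))"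
      by (subst sum.swap) (simp add: mult_ac)
    have s3: "(\<Sum>k<M. \<Sum>m<M. c k * c m * (r k * Dk m)) = (\<Sum>k<M. c k * r k) * (\<Sum>m<M. c m * Dk m)"
      by (simp add: sum_distrib_left sum_distrib_right mult_ac)
    show ?thesis
      unfolding cSe tpair_EB[OF l(1)] D B TTe Dk_def[symmetric] Pk_def[symmetric] s1 s2 s3
      by simp
  qed
  finally show ?thesis by (simp add: M_def)
qed

end




context tal
begin

lemma EAD_fst0: "fst (EAD X q) = 0" by (cases q) simp

lemma T_tF: "T t \<Longrightarrow> T (tF sa dA br d t)"
  by (simp add: tF_def T_tdiff T_tscale T_tbr)

lemma D_tF: "tdeg 1 t \<Longrightarrow> tdeg 2 (tF sa dA br d t)"
proof -
  assume t: "tdeg 1 t"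
  have "tdeg (1 + 1) (tdiff dA d t)" by (rule D_tdiff[OF t])
  moreover have "tdeg (1 + 1) (tbr br t t)" by (rule D_tbr[OF t t])
  ultimately show ?thesis by (simp add: tF_def D_tscale)
qed

lemma teq_tF: "T u \<Longrightarrow> T u' \<Longrightarrow> u \<approx> u' \<Longrightarrow> tF sa dA br d u \<approx> tF sa dA br d u'"
  unfolding tF_def by (intro teq_append teq_tdiff teq_tscale teq_tbr)

lemma tpair_tF: "lf sa \<phi> \<Longrightarrow> tpair \<phi> \<psi> (tF sa dA br d u) = tpair \<phi> \<psi> (tdiff dA d u) + (1/2) * tpair \<phi> \<psi> (tbr br u u)"
  by (simp add: tF_def tpair_tscale)

lemma tpair_EB_tF: "lf sa \<phi> \<Longrightarrow> tpair \<phi> \<psi> (EB (1, u) (1, u)) = 2 * tpair \<phi> \<psi> (tF sa dA br d u)"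
  by (simp add: tpair_EB tpair_tF tpair_tscale)

lemma T_gterm: "T X \<Longrightarrow> T \<alpha> \<Longrightarrow> T (gauge_term sa dA br d X \<alpha> k)"
  by (simp add: gauge_term_def T_tscale T_iter T_tdiff T_tbr)

lemma D_iter: "tdeg 0 X \<Longrightarrow> tdeg n t \<Longrightarrow> tdeg n ((tbr br X ^^ k) t)"
proof (induct k)
  case 0 then show ?case by simp
next
  case (Suc k)
  have "tdeg (0 + n) (tbr br X ((tbr br X ^^ k) t))" by (rule D_tbr[OF Suc(2) Suc(1)[OF Suc(2,3)]])
  then show ?case by simp
qed

lemma D_gterm: "tdeg 0 X \<Longrightarrow> tdeg 1 \<alpha> \<Longrightarrow> tdeg 1 (gauge_term sa dA br d X \<alpha> k)"
proof -
  assume X: "tdeg 0 X" and a: "tdeg 1 \<alpha>"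
  have "tdeg (0 + 1) (tdiff dA d X)" by (rule D_tdiff[OF X])
  moreover have "tdeg (1 + 0) (tbr br \<alpha> X)" by (rule D_tbr[OF a X])
  ultimately have "tdeg 1 (tdiff dA d X @ tbr br \<alpha> X)" by simp
  then show ?thesis unfolding gauge_term_def by (intro D_tscale D_iter[OF X])
qed

lemma T_gpartial: "T X \<Longrightarrow> T \<alpha> \<Longrightarrow> T (gauge_partial sa dA br d X \<alpha> M)"
  unfolding gauge_partial_def by (rule T_concat) (auto simp: T_gterm)
lemma D_gpartial: "tdeg 0 X \<Longrightarrow> tdeg 1 \<alpha> \<Longrightarrow> tdeg 1 (gauge_partial sa dA br d X \<alpha> M)"
  unfolding gauge_partial_def by (rule D_concat) (auto simp: D_gterm)

lemma T_gauge: "T X \<Longrightarrow> T \<alpha> \<Longrightarrow> T (gauge sa s dA br d X \<alpha>)"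
  unfolding gauge_def by (simp add: T_tneg T_gpartial)
lemma D_gauge: "tdeg 0 X \<Longrightarrow> tdeg 1 \<alpha> \<Longrightarrow> tdeg 1 (gauge sa s dA br d X \<alpha>)"
  unfolding gauge_def by (simp add: D_tneg D_gpartial)

lemma tpair_gpartial: "lf sa \<phi> \<Longrightarrow> tpair \<phi> \<psi> (gauge_partial sa dA br d X \<alpha> M) =
   (\<Sum>j<M. (1 / fact (Suc j)) * tpair \<phi> \<psi> ((tbr br X ^^ j) (tdiff dA d X @ tbr br \<alpha> X)))"
  unfolding gauge_partial_def by (simp add: tpair_concat_upt gauge_term_def tpair_tscale)

lemma gpartial_stab:
  assumes N: "lcs s br N0 = {0}" and M: "N0 \<le> M'"
  shows "gauge_partial sa dA br d X \<alpha> M' \<approx> gauge_partial sa dA br d X \<alpha> N0"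
proof (rule teqI)
  fix \<phi> \<psi> assume l: "lf sa \<phi>" "lf s \<psi>"
  show "tpair \<phi> \<psi> (gauge_partial sa dA br d X \<alpha> M') = tpair \<phi> \<psi> (gauge_partial sa dA br d X \<alpha> N0)"
    unfolding tpair_gpartial[OF l(1)]
    by (rule sum.mono_neutral_left[symmetric]) (use M nil_iter[OF N _ l(2)] in auto)
qed

lemma gauge_teq:
  assumes N: "lcs s br N0 = {0}"
  shows "gauge sa s dA br d X \<alpha> \<approx> \<alpha> @ tneg (gauge_partial sa dA br d X \<alpha> N0)"
proof -
  let ?P = "gauge_partial sa dA br d X \<alpha>"
  let ?Q = "\<lambda>M. \<forall>M'\<ge>M. ?P M' \<approx> ?P M"
  have ex: "?Q N0" using gpartial_stab[OF N] by blast
  have Q: "?Q (LEAST M. ?Q M)" by (rule LeastI[of ?Q, OF ex])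
  have le: "(LEAST M. ?Q M) \<le> N0" by (rule Least_le[of ?Q, OF ex])
  have "?P N0 \<approx> ?P (LEAST M. ?Q M)" using Q le by blast
  then have "?P (LEAST M. ?Q M) \<approx> ?P N0" by (rule teq_sym)
  then show ?thesis unfolding gauge_def by (intro teq_append teq_tneg teq_refl)
qed

lemma main_gauge:
  assumes N: "lcs s br N0 = {0}" and X: "T X" "tdeg 0 X" and a: "T \<alpha>" "tdeg 1 \<alpha>"
    and l: "lf sa \<phi>" "lf s \<psi>"
  shows "tpair \<phi> \<psi> (tF sa dA br d (gauge sa s dA br d X \<alpha>)) =
    (\<Sum>n<2 * Suc N0. (1 / fact n) * tpair \<phi> \<psi> ((tbr br X ^^ n) (tF sa dA br d \<alpha>)))"
proof -
  define p where "p = (1::rat, \<alpha>)"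
  have gp: "good p" using a by (simp add: good_def p_def)
  define P where "P = gauge_partial sa dA br d X \<alpha> N0"
  define Y where "Y = tdiff dA d X"
  have TP: "T P" using X a by (simp add: P_def T_gpartial)
  have TY: "T Y" using X by (simp add: Y_def T_tdiff)
  let ?S = "cS X p (Suc N0)"
  have fstS: "fst ?S = 1"
    by (simp only: cS_def fst_conv sum.lessThan_Suc_shift) (simp add: EA_fst EAD_fst0 p_def)
  have TS: "T (snd ?S)"
    unfolding cS_def using good_EA[OF X gp] by (auto intro!: T_concat T_tscale simp: good_def)
  have snd1: "snd (EAD X p) = tneg (tscale sa 1 Y) @ tbr br X \<alpha>" by (simp add: p_def Y_def)
  have T1: "T (snd (EAD X p))" using good_EAD[OF X gp] by (simp add: good_def)
  have TYa: "T (Y @ tbr br \<alpha> X)" using TY a X by (simp add: T_tbr)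
  have it: "\<forall>\<phi> \<psi>. lf sa \<phi> \<longrightarrow> lf s \<psi> \<longrightarrow> tpair \<phi> \<psi> ((tbr br X ^^ j) (snd (EAD X p))) =
      - 1 * tpair \<phi> \<psi> ((tbr br X ^^ j) (Y @ tbr br \<alpha> X))" for j
  proof (rule iter_scale[OF X(1) T1 TYa], intro allI impI)
    fix \<phi> \<psi> :: "_ \<Rightarrow> rat" assume l: "lf sa \<phi>" "lf s \<psi>"
    have "tpair \<phi> \<psi> (tbr br X \<alpha>) = tpair \<phi> \<psi> (tneg (tbr br \<alpha> X))"
      by (rule teqD[OF ANTI0[OF X a] l])
    then show "tpair \<phi> \<psi> (snd (EAD X p)) = - 1 * tpair \<phi> \<psi> (Y @ tbr br \<alpha> X)"
      unfolding snd1 using l by (simp add: tpair_tneg tpair_tscale)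
  qed
  have sndS: "snd ?S \<approx> \<alpha> @ tneg P"
  proof (rule teqI)
    fix \<phi> \<psi> :: "_ \<Rightarrow> rat" assume l: "lf sa \<phi>" "lf s \<psi>"
    have "tpair \<phi> \<psi> (snd ?S) = (\<Sum>k<Suc N0. (1 / fact k) * tpair \<phi> \<psi> (snd ((EAD X ^^ k) p)))"
      by (simp add: cS_def tpair_concat_upt tpair_tscale[OF l(1)])
    also have "\<dots> = tpair \<phi> \<psi> \<alpha> + (\<Sum>j<N0. (1 / fact (Suc j)) * tpair \<phi> \<psi> (snd ((EAD X ^^ Suc j) p)))"
      by (subst sum.lessThan_Suc_shift) (simp add: p_def)
    also have "\<dots> = tpair \<phi> \<psi> \<alpha> + (\<Sum>j<N0. (1 / fact (Suc j)) * (- tpair \<phi> \<psi> ((tbr br X ^^ j) (Y @ tbr br \<alpha> X))))"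
      using EA_snd[OF X gp] it l by simp
    also have "\<dots> = tpair \<phi> \<psi> (\<alpha> @ tneg P)"
      by (simp add: P_def tpair_gpartial[OF l(1)] tpair_tneg[OF l(1)] Y_def sum_negf)
    finally show "tpair \<phi> \<psi> (snd ?S) = tpair \<phi> \<psi> (\<alpha> @ tneg P)" .
  qed
  have Sform: "?S = (1, snd ?S)" using fstS by (metis prod.collapse)
  have TaP: "T (\<alpha> @ tneg P)" using a TP by (simp add: T_tneg)
  have "tpair \<phi> \<psi> (tF sa dA br d (gauge sa s dA br d X \<alpha>)) = tpair \<phi> \<psi> (tF sa dA br d (\<alpha> @ tneg P))"
    using teqD[OF teq_tF[OF T_gauge[OF X(1) a(1)] TaP gauge_teq[OF N, where X=X and \<alpha>=\<alpha>, folded P_def]] l] .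
  also have "\<dots> = tpair \<phi> \<psi> (tF sa dA br d (snd ?S))"
    using teqD[OF teq_tF[OF TaP TS teq_sym[OF sndS]] l] .
  also have "\<dots> = (1/2) * tpair \<phi> \<psi> (EB ?S ?S)"
    using tpair_EB_tF[OF l(1), where u="snd ?S"] Sform by simp
  also have "\<dots> = (1/2) * (\<Sum>n<2 * Suc N0. (1 / fact n) * tpair \<phi> \<psi> ((tbr br X ^^ n) (EB p p)))"
    using cauchy[OF N X gp l] by simp
  also have "\<dots> = (\<Sum>n<2 * Suc N0. (1 / fact n) * tpair \<phi> \<psi> ((tbr br X ^^ n) (tF sa dA br d \<alpha>)))"
  proof -
    have TE: "T (EB p p)" by (rule T_EB[OF gp gp])
    have h: "\<forall>\<phi> \<psi>. lf sa \<phi> \<longrightarrow> lf s \<psi> \<longrightarrow> tpair \<phi> \<psi> (EB p p) = 2 * tpair \<phi> \<psi> (tF sa dA br d \<alpha>)"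
      using tpair_EB_tF by (simp only: p_def) blast
    have "tpair \<phi> \<psi> ((tbr br X ^^ n) (EB p p)) = 2 * tpair \<phi> \<psi> ((tbr br X ^^ n) (tF sa dA br d \<alpha>))" for n
      using iter_scale[OF X(1) TE T_tF[OF a(1)] h] l by blast
    then have "(1/2) * ((1 / fact n) * tpair \<phi> \<psi> ((tbr br X ^^ n) (EB p p))) =
        (1 / fact n) * tpair \<phi> \<psi> ((tbr br X ^^ n) (tF sa dA br d \<alpha>))" for n
      by simp
    then show ?thesis by (simp only: sum_distrib_left)
  qed
  finally show ?thesis .
qed

end




lemma exists_functional:
  assumes vs: "vector_space s" and x: "x \<noteq> 0"
  shows "\<exists>f. lf s f \<and> f x = 1"
proof -
  interpret P: vector_space_pair s "(*) :: rat \<Rightarrow> rat \<Rightarrow> rat"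
    by (simp add: vector_space_pair_def vs vs_rat)
  have ind: "P.vs1.independent {x}"
    using x by (intro P.vs1.independent_insertI) (auto simp: P.vs1.span_empty P.vs1.independent_empty)
  have l: "Vector_Spaces.linear s (*) (P.construct {x} (\<lambda>_. 1))"
    by (rule P.linear_construct[OF ind])
  have "P.construct {x} (\<lambda>_. 1) x = 1" by (rule P.construct_basis[OF ind]) simp
  then show ?thesis using l linear_lf[OF vs] by blast
qed

lemma lf_sep:
  assumes vs: "vector_space s" and h: "\<And>f. lf s f \<Longrightarrow> f x = f y"
  shows "x = y"
proof (rule ccontr)
  assume "x \<noteq> y"
  then have "x - y \<noteq> 0" by simp
  then obtain f where f: "lf s f" "f (x - y) = 1" using exists_functional[OF vs] by blast
  then show False using h[OF f(1)] lf_diff[OF f(1)] by simp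
qed

lemma glin_add: "Vector_Spaces.linear s1 s2 f \<Longrightarrow> f (x + y) = f x + f y"
  unfolding Vector_Spaces.linear_iff by blast
lemma glin_0: "Vector_Spaces.linear s1 s2 f \<Longrightarrow> f 0 = 0"
  using glin_add[of s1 s2 f 0 0] by simp
lemma lin_sum: "Vector_Spaces.linear s1 s2 f \<Longrightarrow> f (sum g S) = (\<Sum>i\<in>S. f (g i))"
  by (induct S rule: infinite_finite_induct) (auto simp: glin_0 glin_add)

fun tme :: "('v \<Rightarrow> 'u) \<Rightarrow> int \<times> 'a \<times> int \<times> 'v \<Rightarrow> int \<times> 'a \<times> int \<times> 'u" where
  "tme f (i, a, j, w) = (i, a, j, f w)"

lemma tmap_tme: "tmap f t = map (tme f) t"
  unfolding tmap_def by (intro map_cong) auto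

lemma tmap_append[simp]: "tmap f (t1 @ t2) = tmap f t1 @ tmap f t2" by (simp add: tmap_def)
lemma tmap_concat: "tmap f (concat ts) = concat (map (tmap f) ts)" by (induct ts) (auto simp: tmap_def)
lemma tme_nge: "tme f (nge x) = nge (tme f x)" by (cases x) simp
lemma tme_sce: "tme f (sce sa r x) = sce sa r (tme f x)" by (cases x) simp
lemma tmap_tneg: "tmap f (tneg t) = tneg (tmap f t)" by (simp add: tmap_tme tneg_nge tme_nge)
lemma tmap_tscale: "tmap f (tscale sa r t) = tscale sa r (tmap f t)"
  by (simp add: tmap_tme tscale_sce tme_sce)

locale extn =
  fixes sa :: "rat \<Rightarrow> 'a::ring \<Rightarrow> 'a" and GA :: "int \<Rightarrow> 'a set" and dA :: "'a \<Rightarrow> 'a"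
    and st :: "rat \<Rightarrow> 'm::ab_group_add \<Rightarrow> 'm" and Gt :: "int \<Rightarrow> 'm set"
    and brt :: "'m \<Rightarrow> 'm \<Rightarrow> 'm" and dt :: "'m \<Rightarrow> 'm"
    and s :: "rat \<Rightarrow> 'l::ab_group_add \<Rightarrow> 'l" and G :: "int \<Rightarrow> 'l set"
    and br :: "'l \<Rightarrow> 'l \<Rightarrow> 'l" and d :: "'l \<Rightarrow> 'l"
    and \<pi> :: "'m \<Rightarrow> 'l" and q :: int and z :: 'm
  assumes cd: "cdga sa GA dA" and mpd: "mc_product_data st Gt brt dt s G br d \<pi> q z"
begin

lemma dglaT: "dgla st Gt brt dt" using mpd[unfolded mc_product_data_def, THEN conjunct1] by blast
lemma dglaL: "dgla s G br d" using mpd[unfolded mc_product_data_def, THEN conjunct2, THEN conjunct1] by blast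
lemma nilT: "nilpotent_la st brt" using mpd[unfolded mc_product_data_def, THEN conjunct2, THEN conjunct2, THEN conjunct1] by blast
lemma nilL: "nilpotent_la s br" using mpd[unfolded mc_product_data_def, THEN conjunct2, THEN conjunct2, THEN conjunct2, THEN conjunct1] by blast
lemma hom: "dgla_hom st Gt brt dt s G br d \<pi>" using mpd[unfolded mc_product_data_def, THEN conjunct2, THEN conjunct2, THEN conjunct2, THEN conjunct2, THEN conjunct2, THEN conjunct2, THEN conjunct1] by blast
lemma pisurj: "surj \<pi>" using mpd[unfolded mc_product_data_def, THEN conjunct2, THEN conjunct2, THEN conjunct2, THEN conjunct2, THEN conjunct2, THEN conjunct2, THEN conjunct2, THEN conjunct1] by blast
lemma central: "\<forall>x y. \<pi> x = 0 \<longrightarrow> brt x y = 0" using mpd[unfolded mc_product_data_def, THEN conjunct2, THEN conjunct2, THEN conjunct2, THEN conjunct2, THEN conjunct2, THEN conjunct2, THEN conjunct2, THEN conjunct2, THEN conjunct1] by blast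
lemma kerdt: "\<forall>x. \<pi> x = 0 \<longrightarrow> dt x = 0" using mpd[unfolded mc_product_data_def, THEN conjunct2, THEN conjunct2, THEN conjunct2, THEN conjunct2, THEN conjunct2, THEN conjunct2, THEN conjunct2, THEN conjunct2, THEN conjunct2, THEN conjunct1] by blast
lemma qle: "q \<le> 0" using mpd[unfolded mc_product_data_def, THEN conjunct2, THEN conjunct2, THEN conjunct2, THEN conjunct2, THEN conjunct2, THEN conjunct2, THEN conjunct2, THEN conjunct2, THEN conjunct2, THEN conjunct2, THEN conjunct2, THEN conjunct1] by blast
lemma zG: "z \<in> Gt q" using mpd[unfolded mc_product_data_def, THEN conjunct2, THEN conjunct2, THEN conjunct2, THEN conjunct2, THEN conjunct2, THEN conjunct2, THEN conjunct2, THEN conjunct2, THEN conjunct2, THEN conjunct2, THEN conjunct2, THEN conjunct2, THEN conjunct1] by blast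
lemma zne: "z \<noteq> 0" using mpd[unfolded mc_product_data_def, THEN conjunct2, THEN conjunct2, THEN conjunct2, THEN conjunct2, THEN conjunct2, THEN conjunct2, THEN conjunct2, THEN conjunct2, THEN conjunct2, THEN conjunct2, THEN conjunct2, THEN conjunct2, THEN conjunct2, THEN conjunct1] by blast
lemma ker: "{x. \<pi> x = 0} = range (\<lambda>r. st r z)" using mpd[unfolded mc_product_data_def, THEN conjunct2, THEN conjunct2, THEN conjunct2, THEN conjunct2, THEN conjunct2, THEN conjunct2, THEN conjunct2, THEN conjunct2, THEN conjunct2, THEN conjunct2, THEN conjunct2, THEN conjunct2, THEN conjunct2, THEN conjunct2] by blast
lemma pi_lin: "Vector_Spaces.linear st s \<pi>" using hom[unfolded dgla_hom_def, THEN conjunct1] by blast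
lemma pi_deg: "\<forall>i x. x \<in> Gt i \<longrightarrow> \<pi> x \<in> G i" using hom[unfolded dgla_hom_def, THEN conjunct2, THEN conjunct1] by blast
lemma pi_br: "\<forall>x y. \<pi> (brt x y) = br (\<pi> x) (\<pi> y)" using hom[unfolded dgla_hom_def, THEN conjunct2, THEN conjunct2, THEN conjunct1] by blast
lemma pi_d: "\<forall>x. \<pi> (dt x) = d (\<pi> x)" using hom[unfolded dgla_hom_def, THEN conjunct2, THEN conjunct2, THEN conjunct2] by blast

sublocale L: tal sa GA dA s G br d by (rule tal.intro[OF cd dglaL])
sublocale Lt: tal sa GA dA st Gt brt dt by (rule tal.intro[OF cd dglaT])

lemma pi_z: "\<pi> z = 0"
proof -
  have "z \<in> range (\<lambda>r. st r z)" by (rule range_eqI[where x=1]) (simp add: Lt.vsV vector_space.vector_space_assms(4))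
  then show ?thesis using ker by blast
qed

lemma brt_z: "w \<in> Gt j \<Longrightarrow> brt w z = 0"
  using Lt.br_anti[OF _ zG, of w j] central pi_z by (simp add: gsign_def)

lemma dt_z: "dt z = 0" using kerdt pi_z by blast

lemma pi_0: "\<pi> 0 = 0" by (rule Lt.lin_0[OF pi_lin])
lemma pi_add: "\<pi> (x + y) = \<pi> x + \<pi> y" by (rule Lt.lin_add[OF pi_lin])
lemma pi_scale: "\<pi> (st c x) = s c (\<pi> x)" by (rule Lt.lin_scale[OF pi_lin])

lemma pi_gvdec: "\<pi> (gvdec Gt x j) = gvdec G (\<pi> x) j"
proof -
  let ?S = "{i. gvdec Gt x i \<noteq> 0}"
  have "gvdec G (\<pi> x) = (\<lambda>i. \<pi> (gvdec Gt x i))"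
  proof (rule gvdec_eqI[OF L.gV])
    show "finite ?S" using gvdec_prop[OF Lt.gV] by blast
    show "\<And>i. i \<notin> ?S \<Longrightarrow> \<pi> (gvdec Gt x i) = 0" by (simp add: pi_0)
    show "\<And>i. \<pi> (gvdec Gt x i) \<in> G i" using pi_deg gvdec_in[OF Lt.gV] by blast
    have "x = (\<Sum>i\<in>?S. gvdec Gt x i)" using gvdec_prop[OF Lt.gV] by blast
    then show "\<pi> x = (\<Sum>i\<in>?S. \<pi> (gvdec Gt x i))" by (metis lin_sum[OF pi_lin])
  qed
  then show ?thesis by simp
qed

definition lw :: "int \<Rightarrow> 'l \<Rightarrow> 'm" where "lw j w = gvdec Gt (SOME x. \<pi> x = w) j"

lemma lw: assumes "w \<in> G j" shows "\<pi> (lw j w) = w" "lw j w \<in> Gt j"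
proof -
  have "\<pi> (SOME x. \<pi> x = w) = w" using pisurj by (metis (mono_tags) someI surjD)
  then show "\<pi> (lw j w) = w" using gvdec_hom[OF L.gV assms] by (simp add: lw_def pi_gvdec)
  show "lw j w \<in> Gt j" unfolding lw_def by (rule gvdec_in[OF Lt.gV])
qed

definition lft :: "('a, 'l) tens \<Rightarrow> ('a, 'm) tens" where
  "lft t = map (\<lambda>(i, a, j, w). (i, a, j, lw j w)) t"

lemma lft_map: "tplus GA G t \<Longrightarrow> tmap \<pi> (lft t) = t"
  unfolding lft_def tmap_def L.T3 by (induct t) (auto simp: lw)
lemma lft_T: "tplus GA G t \<Longrightarrow> tplus GA Gt (lft t)"
  unfolding lft_def L.T3 Lt.T3 by (auto simp: lw)
lemma lft_D: "tdeg n t \<Longrightarrow> tdeg n (lft t)"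
  unfolding lft_def L.D3 Lt.D3 by auto

lemma tmap_tbr: "tmap \<pi> (tbr brt u v) = tbr br (tmap \<pi> u) (tmap \<pi> v)"
proof -
  have h: "tme \<pi> (cb brt e f) = cb br (tme \<pi> e) (tme \<pi> f)" for e f
    using pi_br by (cases e; cases f) (simp add: Lt.lin_gsign[OF pi_lin])
  show ?thesis unfolding tmap_tme tbr_cb by (simp add: map_concat o_def h)
qed

lemma tmap_tdiff: "tmap \<pi> (tdiff dA dt u) = tdiff dA d (tmap \<pi> u)"
proof -
  have "map (tme \<pi>) [dd1 dA e, dd2 dt e] = [dd1 dA (tme \<pi> e), dd2 d (tme \<pi> e)]" for e
    using pi_d by (cases e) simp
  then show ?thesis unfolding tmap_tme tdiff_dd by (simp add: map_concat o_def)
qed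

lemma tmap_iter: "tmap \<pi> ((tbr brt X ^^ n) t) = (tbr br (tmap \<pi> X) ^^ n) (tmap \<pi> t)"
  by (induct n) (auto simp: tmap_tbr)

lemma tmap_tF: "tmap \<pi> (tF sa dA brt dt t) = tF sa dA br d (tmap \<pi> t)"
  by (simp add: tF_def tmap_tscale tmap_tbr tmap_tdiff)

lemma tmap_gpartial: "tmap \<pi> (gauge_partial sa dA brt dt X \<alpha> M) = gauge_partial sa dA br d (tmap \<pi> X) (tmap \<pi> \<alpha>) M"
  unfolding gauge_partial_def gauge_term_def by (simp add: tmap_concat tmap_tscale tmap_iter tmap_tdiff tmap_tbr o_def)

lemma lf_pi: "lf s \<psi> \<Longrightarrow> lf st (\<lambda>x. \<psi> (\<pi> x))" by (rule lf_comp[OF pi_lin])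

lemma teq_tmap: "teq sa st u u' \<Longrightarrow> teq sa s (tmap \<pi> u) (tmap \<pi> u')"
  by (rule L.teqI) (simp add: tpair_tmap Lt.teqD lf_pi)

end




lemma lf_sum_list: "lf s f \<Longrightarrow> f (sum_list xs) = (\<Sum>x\<leftarrow>xs. f x)"
  by (induct xs) (auto simp: lf_0 lf_add)

lemma tpair_diff_fun: "tpair \<phi> (\<lambda>x. \<psi> x - c * \<chi> x) t = tpair \<phi> \<psi> t - c * tpair \<phi> \<chi> t"
  by (induct t) (auto simp: tpair_Cons algebra_simps)

context extn
begin

lemma chi_exists: "\<exists>\<chi>. lf st \<chi> \<and> \<chi> z = 1 \<and> (\<forall>j w. w \<in> Gt j \<longrightarrow> j \<noteq> q \<longrightarrow> \<chi> w = 0)"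
proof -
  obtain \<chi>0 where c0: "lf st \<chi>0" "\<chi>0 z = 1" using exists_functional[OF Lt.vsV zne] by blast
  define \<chi> where "\<chi> x = \<chi>0 (gvdec Gt x q)" for x
  have "lf st \<chi>" unfolding \<chi>_def by (rule lf_comp[OF gvdec_linear[OF Lt.gV] c0(1)])
  moreover have "\<chi> z = 1" using c0(2) gvdec_hom[OF Lt.gV zG] by (simp add: \<chi>_def)
  moreover have "\<forall>j w. w \<in> Gt j \<longrightarrow> j \<noteq> q \<longrightarrow> \<chi> w = 0"
    using gvdec_hom[OF Lt.gV] lf_0[OF c0(1)] by (simp add: \<chi>_def)
  ultimately show ?thesis by blast
qed

lemma ker_z: "\<pi> x = 0 \<Longrightarrow> \<exists>r. x = st r z" using ker by blast

lemma factor: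
  assumes l: "lf st \<psi>" and z0: "\<psi> z = 0"
  shows "\<exists>\<psi>2. lf s \<psi>2 \<and> (\<forall>x. \<psi> x = \<psi>2 (\<pi> x))"
proof -
  have k: "\<psi> x = \<psi> x'" if "\<pi> x = \<pi> x'" for x x'
  proof -
    have "\<pi> (x - x') = 0" using that Lt.lin_add[OF pi_lin, of x "- x'"] Lt.lin_neg[OF pi_lin, of x'] by simp
    then obtain r where "x - x' = st r z" using ker_z by blast
    then have "\<psi> (x - x') = 0" using lf_scale[OF l] z0 by simp
    then show ?thesis using lf_diff[OF l] by simp
  qed
  define \<psi>2 where "\<psi>2 y = \<psi> (SOME x. \<pi> x = y)" for y
  have sel: "\<pi> (SOME x. \<pi> x = y) = y" for y using pisurj by (metis (mono_tags) someI surjD)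
  have e: "\<psi> x = \<psi>2 (\<pi> x)" for x unfolding \<psi>2_def by (rule k) (simp add: sel)
  have "lf s \<psi>2"
    unfolding lf_def
  proof (intro conjI allI)
    fix y1 y2
    obtain x1 x2 where "\<pi> x1 = y1" "\<pi> x2 = y2" using sel by blast
    then show "\<psi>2 (y1 + y2) = \<psi>2 y1 + \<psi>2 y2"
      using e[of "x1 + x2"] e[of x1] e[of x2] pi_add lf_add[OF l] by metis
  next
    fix c y
    obtain x where "\<pi> x = y" using sel by blast
    then show "\<psi>2 (s c y) = c * \<psi>2 y"
      using e[of "st c x"] e[of x] pi_scale lf_scale[OF l] by metis
  qed
  then show ?thesis using e by blast
qed

lemma gvA_sum_list: "(\<And>x. x \<in> set xs \<Longrightarrow> x \<in> GA k) \<Longrightarrow> sum_list xs \<in> GA k"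
  by (induct xs) (auto intro: gv_0[OF L.gA] gv_add[OF L.gA])

lemma extr_lemma:
  assumes t: "tplus GA Gt t" "tdeg n t" and k: "teq sa s (tmap \<pi> t) []"
  shows "\<exists>b\<in>GA (n - q). teq sa st t [(n - q, b, q, z)]"
proof -
  obtain \<chi> where c: "lf st \<chi>" "\<chi> z = 1" "\<And>j w. w \<in> Gt j \<Longrightarrow> j \<noteq> q \<Longrightarrow> \<chi> w = 0"
    using chi_exists by blast
  define bf where "bf e = (case e of (i, a, j, w) \<Rightarrow> sa (\<chi> w) a)" for e :: "int \<times> 'a \<times> int \<times> 'm"
  define b where "b = sum_list (map bf t)"
  have bin: "b \<in> GA (n - q)"
    unfolding b_def
  proof (rule gvA_sum_list)
    fix x assume "x \<in> set (map bf t)"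
    then obtain e where e: "e \<in> set t" "x = bf e" by auto
    obtain i a j w where ee: "e = (i, a, j, w)" by (cases e)
    have h: "0 < i" "a \<in> GA i" "w \<in> Gt j" "i + j = n" using Lt.T_mem[OF t(1)] Lt.D_mem[OF t(2)] e ee by blast+
    show "x \<in> GA (n - q)"
    proof (cases "j = q")
      case True
      then have "i = n - q" using h by simp
      then show ?thesis using e ee h gv_scale[OF L.gA] by (simp add: bf_def)
    next
      case False
      then have "\<chi> w = 0" using c(3) h by blast
      then show ?thesis using e ee gv_0[OF L.gA] by (simp add: bf_def vector_space.vector_space_assms L.vsA
          module.scale_zero_left[OF L.vsA[unfolded module_iff_vector_space[symmetric]]])
    qed
  qed
  have "teq sa st t [(n - q, b, q, z)]"
  proof (rule Lt.teqI)
    fix \<phi> \<psi> assume l: "lf sa \<phi>" "lf st \<psi>"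
    have pb: "\<phi> b = tpair \<phi> \<chi> t"
      unfolding b_def lf_sum_list[OF l(1)] tpair_pv
      by (rule arg_cong[where f=sum_list]) (auto simp: bf_def lf_scale[OF l(1)] intro!: map_cong)
    define \<psi>' where "\<psi>' x = \<psi> x - \<psi> z * \<chi> x" for x
    have l': "lf st \<psi>'" unfolding \<psi>'_def using l(2) c(1) by (simp add: lf_def algebra_simps)
    have z': "\<psi>' z = 0" by (simp add: \<psi>'_def c(2))
    obtain \<psi>2 where p2: "lf s \<psi>2" "\<And>x. \<psi>' x = \<psi>2 (\<pi> x)" using factor[OF l' z'] by blast
    have "\<psi>' = (\<lambda>x. \<psi>2 (\<pi> x))" using p2(2) by (rule ext)
    then have "tpair \<phi> \<psi>' t = tpair \<phi> \<psi>2 (tmap \<pi> t)" by (simp add: tpair_tmap)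
    also have "\<dots> = 0" using L.teqD[OF k l(1) p2(1)] by simp
    finally have "tpair \<phi> \<psi>' t = 0" .
    then have "tpair \<phi> \<psi> t - \<psi> z * \<phi> b = 0"
      unfolding pb using tpair_diff_fun[of \<phi> \<psi> "\<psi> z" \<chi> t] by (simp add: \<psi>'_def[abs_def])
    then show "tpair \<phi> \<psi> t = tpair \<phi> \<psi> [(n - q, b, q, z)]" by (simp add: tpair_Cons)
  qed
  then show ?thesis using bin by blast
qed

end




context extn
begin

lemma tpair_br_Z_R:
  assumes u: "tplus GA Gt u" and l: "lf sa \<phi>" "lf st \<psi>"
  shows "tpair \<phi> \<psi> (tbr brt u [(i, b, q, z)]) = 0"
proof -
  have "tpair \<phi> \<psi> (tbr brt u [(i, b, q, z)]) = (\<Sum>e\<leftarrow>u. pv \<phi> \<psi> (cb brt e (i, b, q, z)))"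
    by (simp add: tpair_tbr)
  also have "\<dots> = (\<Sum>e\<leftarrow>u. 0)"
  proof (rule sum_list_cong)
    fix e assume e: "e \<in> set u"
    obtain i1 a1 j1 w1 where ee: "e = (i1, a1, j1, w1)" by (cases e)
    have "w1 \<in> Gt j1" using Lt.T_mem[OF u] e ee by blast
    then show "pv \<phi> \<psi> (cb brt e (i, b, q, z)) = 0" using ee brt_z lf_0[OF l(2)] by simp
  qed
  finally show ?thesis by simp
qed

lemma tpair_br_Z_L:
  assumes l: "lf sa \<phi>" "lf st \<psi>"
  shows "tpair \<phi> \<psi> (tbr brt [(i, b, q, z)] u) = 0"
proof -
  have "pv \<phi> \<psi> (cb brt (i, b, q, z) e) = 0" for e
    using central pi_z lf_0[OF l(2)] by (cases e) simp
  then show ?thesis by (simp add: tpair_tbr)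
qed

lemma tF_shift:
  assumes u: "tplus GA Gt u" and l: "lf sa \<phi>" "lf st \<psi>"
  shows "tpair \<phi> \<psi> (tF sa dA brt dt (u @ [(1 - q, b, q, z)])) =
    tpair \<phi> \<psi> (tF sa dA brt dt u) + \<phi> (dA b) * \<psi> z"
proof -
  have D: "tpair \<phi> \<psi> (tdiff dA dt [(1 - q, b, q, z)]) = \<phi> (dA b) * \<psi> z"
    by (simp add: tdiff_def tpair_Cons dt_z lf_0[OF l(2)])
  show ?thesis
    by (simp add: tF_def tpair_tscale[OF l(1)] tpair_br_Z_R[OF u l] tpair_br_Z_L[OF l] D algebra_simps)
qed

lemma mc_rep_unique:
  assumes c1: "mc_rep sa GA dA st Gt brt dt s \<pi> q z \<beta> c" and c2: "mc_rep sa GA dA st Gt brt dt s \<pi> q z \<beta> c'"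
  shows "coh_class GA dA (2 - q) c' = coh_class GA dA (2 - q) c"
proof -
  obtain a1 where a1: "tplus GA Gt a1" "tdeg 1 a1" "teq sa s (tmap \<pi> a1) \<beta>" "c \<in> GA (2 - q)"
     "teq sa st (tF sa dA brt dt a1) [(2 - q, c, q, z)]"
    using c1 unfolding mc_rep_def by blast
  obtain a2 where a2: "tplus GA Gt a2" "tdeg 1 a2" "teq sa s (tmap \<pi> a2) \<beta>" "c' \<in> GA (2 - q)"
     "teq sa st (tF sa dA brt dt a2) [(2 - q, c', q, z)]"
    using c2 unfolding mc_rep_def by blast
  define \<delta> where "\<delta> = a2 @ tneg a1"
  have Td: "tplus GA Gt \<delta>" using a1 a2 by (simp add: \<delta>_def Lt.T_tneg)
  have Dd: "tdeg 1 \<delta>" using a1 a2 by (simp add: \<delta>_def Lt.D_tneg)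
  have kd: "teq sa s (tmap \<pi> \<delta>) []"
  proof (rule L.teqI)
    fix \<phi> \<psi> assume l: "lf sa \<phi>" "lf s \<psi>"
    show "tpair \<phi> \<psi> (tmap \<pi> \<delta>) = tpair \<phi> \<psi> []"
      using L.teqD[OF a1(3) l] L.teqD[OF a2(3) l]
      by (simp add: \<delta>_def tmap_tneg tpair_tneg[OF l(1)])
  qed
  obtain b where b: "b \<in> GA (1 - q)" "teq sa st \<delta> [(1 - q, b, q, z)]"
    using extr_lemma[OF Td Dd kd] by auto
  have TZ: "tplus GA Gt (a1 @ [(1 - q, b, q, z)])"
    using a1(1) b(1) qle zG by (simp add: Lt.T3)
  have a2e: "teq sa st a2 (a1 @ [(1 - q, b, q, z)])"
  proof (rule Lt.teqI)
    fix \<phi> \<psi> assume l: "lf sa \<phi>" "lf st \<psi>"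
    show "tpair \<phi> \<psi> a2 = tpair \<phi> \<psi> (a1 @ [(1 - q, b, q, z)])"
      using Lt.teqD[OF b(2) l] by (simp add: \<delta>_def tpair_tneg[OF l(1)])
  qed
  have key: "\<phi> c' = \<phi> (c + dA b)" if l: "lf sa \<phi>" for \<phi>
  proof -
    obtain \<chi> where ch: "lf st \<chi>" "\<chi> z = 1" using chi_exists by blast
    have "tpair \<phi> \<chi> (tF sa dA brt dt a2) = tpair \<phi> \<chi> (tF sa dA brt dt (a1 @ [(1 - q, b, q, z)]))"
      using Lt.teqD[OF Lt.teq_tF[OF a2(1) TZ a2e] l ch(1)] .
    also have "\<dots> = tpair \<phi> \<chi> (tF sa dA brt dt a1) + \<phi> (dA b) * \<chi> z"
      by (rule tF_shift[OF a1(1) l ch(1)])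
    finally have "tpair \<phi> \<chi> (tF sa dA brt dt a2) = tpair \<phi> \<chi> (tF sa dA brt dt a1) + \<phi> (dA b)"
      using ch(2) by simp
    then show ?thesis using Lt.teqD[OF a1(5) l ch(1)] Lt.teqD[OF a2(5) l ch(1)] ch(2)
      by (simp add: tpair_Cons lf_add[OF l])
  qed
  have cc: "c' = c + dA b" by (rule lf_sep[OF L.vsA key])
  have e: "2 - q - 1 = 1 - q" by simp
  show ?thesis
    unfolding coh_class_def e
  proof (intro set_eqI iffI)
    fix x assume "x \<in> {c' + dA b' |b'. b' \<in> GA (1 - q)}"
    then obtain b' where "x = c' + dA b'" "b' \<in> GA (1 - q)" by blast
    then have "x = c + dA (b + b')" "b + b' \<in> GA (1 - q)"
      using cc b(1) gv_add[OF L.gA] by (auto simp: L.dA_add)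
    then show "x \<in> {c + dA b' |b'. b' \<in> GA (1 - q)}" by blast
  next
    fix x assume "x \<in> {c + dA b' |b'. b' \<in> GA (1 - q)}"
    then obtain b' where x: "x = c + dA b'" "b' \<in> GA (1 - q)" by blast
    define y where "y = b' + - b"
    have y: "y \<in> GA (1 - q)" unfolding y_def using x(2) b(1) gv_add[OF L.gA] gv_neg[OF L.gA] by blast
    have dy: "dA y = dA b' + - dA b" unfolding y_def by (simp only: L.dA_add L.lin_neg[OF L.dA_lin])
    have "x = c' + dA y" using x(1) cc dy by simp
    then show "x \<in> {c' + dA b' |b'. b' \<in> GA (1 - q)}" using y by blast
  qed
qed

lemma mc_product_eq:
  assumes "mc_rep sa GA dA st Gt brt dt s \<pi> q z \<beta> c"
  shows "mc_product sa GA dA st Gt brt dt s \<pi> q z \<beta> = coh_class GA dA (2 - q) c"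
  unfolding mc_product_def
proof (rule the_equality)
  show "\<exists>c'. mc_rep sa GA dA st Gt brt dt s \<pi> q z \<beta> c' \<and> coh_class GA dA (2 - q) c = coh_class GA dA (2 - q) c'"
    using assms by blast
  fix C assume "\<exists>c'. mc_rep sa GA dA st Gt brt dt s \<pi> q z \<beta> c' \<and> C = coh_class GA dA (2 - q) c'"
  then obtain c' where "mc_rep sa GA dA st Gt brt dt s \<pi> q z \<beta> c'" "C = coh_class GA dA (2 - q) c'" by blast
  then show "C = coh_class GA dA (2 - q) c" using mc_rep_unique[OF assms] by simp
qed

end




context extn
begin

lemma final:
  assumes ds: "defining_system sa GA dA s G br d \<alpha>" and X: "tplus GA G X" "tdeg 0 X"
  shows "defining_system sa GA dA s G br d (gauge sa s dA br d X \<alpha>) \<and>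
         mc_product sa GA dA st Gt brt dt s \<pi> q z (gauge sa s dA br d X \<alpha>) =
         mc_product sa GA dA st Gt brt dt s \<pi> q z \<alpha>"
proof -
  have aT: "tplus GA G \<alpha>" and aD: "tdeg 1 \<alpha>" and aF: "teq sa s (tF sa dA br d \<alpha>) []"
    using ds by (auto simp: defining_system_def)
  obtain N1 where N1: "lcs s br N1 = {0}" using nilL by (auto simp: nilpotent_la_def)
  obtain N2 where N2: "lcs st brt N2 = {0}" using nilT by (auto simp: nilpotent_la_def)
  let ?g = "gauge sa s dA br d X \<alpha>"
  have gT: "tplus GA G ?g" by (rule L.T_gauge[OF X(1) aT])
  have gD: "tdeg 1 ?g" by (rule L.D_gauge[OF X(2) aD])
  have h0: "\<forall>\<phi> \<psi>. lf sa \<phi> \<longrightarrow> lf s \<psi> \<longrightarrow> tpair \<phi> \<psi> (tF sa dA br d \<alpha>) = 0 * tpair \<phi> \<psi> []"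
    using L.teqD[OF aF] by simp
  have it0: "tpair \<phi> \<psi> ((tbr br X ^^ n) (tF sa dA br d \<alpha>)) = 0" if l: "lf sa \<phi>" "lf s \<psi>" for \<phi> \<psi> n
    using L.iter_scale[OF X(1) L.T_tF[OF aT] L.T_Nil h0] l by simp
  have gF: "teq sa s (tF sa dA br d ?g) []"
  proof (rule L.teqI)
    fix \<phi> \<psi> assume l: "lf sa \<phi>" "lf s \<psi>"
    show "tpair \<phi> \<psi> (tF sa dA br d ?g) = tpair \<phi> \<psi> []"
      using L.main_gauge[OF N1 X aT aD l] it0[OF l] by simp
  qed
  have DS: "defining_system sa GA dA s G br d ?g"
    using gT gD gF by (simp add: defining_system_def)
  define alt where "alt = lft \<alpha>"
  define Xt where "Xt = lft X"
  have atT: "tplus GA Gt alt" and atD: "tdeg 1 alt" and atm: "tmap \<pi> alt = \<alpha>"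
    using lft_T[OF aT] lft_D[OF aD] lft_map[OF aT] by (auto simp: alt_def)
  have XtT: "tplus GA Gt Xt" and XtD: "tdeg 0 Xt" and Xtm: "tmap \<pi> Xt = X"
    using lft_T[OF X(1)] lft_D[OF X(2)] lft_map[OF X(1)] by (auto simp: Xt_def)
  have FtT: "tplus GA Gt (tF sa dA brt dt alt)" by (rule Lt.T_tF[OF atT])
  have FtD: "tdeg (2 - q + q) (tF sa dA brt dt alt)" using Lt.D_tF[OF atD] by simp
  have Fmap: "teq sa s (tmap \<pi> (tF sa dA brt dt alt)) []" using aF by (simp add: tmap_tF atm)
  obtain c0 where c0: "c0 \<in> GA (2 - q)" and Fc: "teq sa st (tF sa dA brt dt alt) [(2 - q, c0, q, z)]"
    using extr_lemma[OF FtT FtD Fmap] by auto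
  have rep1: "mc_rep sa GA dA st Gt brt dt s \<pi> q z \<alpha> c0"
    unfolding mc_rep_def using atT atD atm c0 Fc L.teq_refl by auto
  define gt where "gt = gauge sa st dA brt dt Xt alt"
  have gtT: "tplus GA Gt gt" unfolding gt_def by (rule Lt.T_gauge[OF XtT atT])
  have gtD: "tdeg 1 gt" unfolding gt_def by (rule Lt.D_gauge[OF XtD atD])
  define N where "N = max N1 N2"
  have A: "teq sa st gt (alt @ tneg (gauge_partial sa dA brt dt Xt alt N))"
  proof -
    have "teq sa st gt (alt @ tneg (gauge_partial sa dA brt dt Xt alt N2))"
      unfolding gt_def by (rule Lt.gauge_teq[OF N2])
    moreover have "teq sa st (alt @ tneg (gauge_partial sa dA brt dt Xt alt N2)) (alt @ tneg (gauge_partial sa dA brt dt Xt alt N))"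
      by (intro Lt.teq_append Lt.teq_refl Lt.teq_tneg Lt.teq_sym[OF Lt.gpartial_stab[OF N2]]) (simp add: N_def)
    ultimately show ?thesis by (rule Lt.teq_trans)
  qed
  have B: "teq sa s ?g (\<alpha> @ tneg (gauge_partial sa dA br d X \<alpha> N))"
  proof -
    have "teq sa s ?g (\<alpha> @ tneg (gauge_partial sa dA br d X \<alpha> N1))"
      by (rule L.gauge_teq[OF N1])
    moreover have "teq sa s (\<alpha> @ tneg (gauge_partial sa dA br d X \<alpha> N1)) (\<alpha> @ tneg (gauge_partial sa dA br d X \<alpha> N))"
      by (intro L.teq_append L.teq_refl L.teq_tneg L.teq_sym[OF L.gpartial_stab[OF N1]]) (simp add: N_def)
    ultimately show ?thesis by (rule L.teq_trans)
  qed
  have gmap: "teq sa s (tmap \<pi> gt) ?g"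
  proof -
    have "teq sa s (tmap \<pi> gt) (tmap \<pi> (alt @ tneg (gauge_partial sa dA brt dt Xt alt N)))"
      by (rule teq_tmap[OF A])
    also have "tmap \<pi> (alt @ tneg (gauge_partial sa dA brt dt Xt alt N)) = \<alpha> @ tneg (gauge_partial sa dA br d X \<alpha> N)"
      by (simp add: tmap_tneg tmap_gpartial atm Xtm)
    finally show ?thesis using L.teq_trans L.teq_sym[OF B] by blast
  qed
  define C where "C = [(2 - q, c0, q, z)]"
  have TC: "tplus GA Gt C" using c0 zG qle by (simp add: C_def Lt.T3)
  have gtF: "teq sa st (tF sa dA brt dt gt) C"
  proof (rule Lt.teqI)
    fix \<phi> \<psi> assume l: "lf sa \<phi>" "lf st \<psi>"
    have h1: "\<forall>\<phi> \<psi>. lf sa \<phi> \<longrightarrow> lf st \<psi> \<longrightarrow> tpair \<phi> \<psi> (tF sa dA brt dt alt) = 1 * tpair \<phi> \<psi> C"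
      using Lt.teqD[OF Fc] by (simp add: C_def)
    have TB: "tplus GA Gt (tbr brt Xt C)" by (rule Lt.T_tbr[OF XtT TC])
    have h2: "\<forall>\<phi> \<psi>. lf sa \<phi> \<longrightarrow> lf st \<psi> \<longrightarrow> tpair \<phi> \<psi> (tbr brt Xt C) = 0 * tpair \<phi> \<psi> []"
      using tpair_br_Z_R[OF XtT] by (simp add: C_def)
    have t1: "tpair \<phi> \<psi> ((tbr brt Xt ^^ Suc m) (tF sa dA brt dt alt)) = 0" for m
    proof -
      have "tpair \<phi> \<psi> ((tbr brt Xt ^^ Suc m) (tF sa dA brt dt alt)) = tpair \<phi> \<psi> ((tbr brt Xt ^^ Suc m) C)"
        using Lt.iter_scale[OF XtT FtT TC h1, of "Suc m"] l by (simp del: funpow.simps)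
      also have "(tbr brt Xt ^^ Suc m) C = (tbr brt Xt ^^ m) (tbr brt Xt C)"
        by (simp add: funpow_Suc_right del: funpow.simps)
      also have "tpair \<phi> \<psi> \<dots> = 0"
        using Lt.iter_scale[OF XtT TB Lt.T_Nil h2] l by simp
      finally show ?thesis .
    qed
    have "tpair \<phi> \<psi> (tF sa dA brt dt gt) =
        (\<Sum>n<2 * Suc N2. (1 / fact n) * tpair \<phi> \<psi> ((tbr brt Xt ^^ n) (tF sa dA brt dt alt)))"
      unfolding gt_def by (rule Lt.main_gauge[OF N2 XtT XtD atT atD l])
    also have "\<dots> = (\<Sum>n<Suc (Suc (2 * N2)). (1 / fact n) * tpair \<phi> \<psi> ((tbr brt Xt ^^ n) (tF sa dA brt dt alt)))"
      by simp
    also have "\<dots> = tpair \<phi> \<psi> (tF sa dA brt dt alt)"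
      by (subst sum.lessThan_Suc_shift) (simp add: t1 del: funpow.simps)
    also have "\<dots> = tpair \<phi> \<psi> C" using h1 l by simp
    finally show "tpair \<phi> \<psi> (tF sa dA brt dt gt) = tpair \<phi> \<psi> C" .
  qed
  have rep2: "mc_rep sa GA dA st Gt brt dt s \<pi> q z ?g c0"
    unfolding mc_rep_def using gtT gtD gmap c0 gtF by (auto simp: C_def)
  show ?thesis using DS mc_product_eq[OF rep1] mc_product_eq[OF rep2] by simp
qed

end

theorem lemma3p6:
  fixes sa :: "rat \<Rightarrow> 'a::ring \<Rightarrow> 'a" and GA :: "int \<Rightarrow> 'a set" and dA :: "'a \<Rightarrow> 'a"
    and st :: "rat \<Rightarrow> 'm::ab_group_add \<Rightarrow> 'm" and Gt :: "int \<Rightarrow> 'm set"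
    and brt :: "'m \<Rightarrow> 'm \<Rightarrow> 'm" and dt :: "'m \<Rightarrow> 'm"
    and s :: "rat \<Rightarrow> 'l::ab_group_add \<Rightarrow> 'l" and G :: "int \<Rightarrow> 'l set"
    and br :: "'l \<Rightarrow> 'l \<Rightarrow> 'l" and d :: "'l \<Rightarrow> 'l"
    and \<pi> :: "'m \<Rightarrow> 'l" and q :: int and z :: 'm
    and \<alpha> X :: "('a, 'l) tens"
  assumes "cdga sa GA dA"
    and "mc_product_data st Gt brt dt s G br d \<pi> q z"
    and "defining_system sa GA dA s G br d \<alpha>"
    and "tplus GA G X" and "tdeg 0 X"
  shows "defining_system sa GA dA s G br d (gauge sa s dA br d X \<alpha>) \<and>
         mc_product sa GA dA st Gt brt dt s \<pi> q z (gauge sa s dA br d X \<alpha>) =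
         mc_product sa GA dA st Gt brt dt s \<pi> q z \<alpha>"
proof -
  interpret E: extn sa GA dA st Gt brt dt s G br d \<pi> q z
    by (rule extn.intro) (rule assms(1), rule assms(2))
  show ?thesis by (rule E.final[OF assms(3-5)])
qed



end
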